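(* Let $\mathcal{N}$ be a quantum channel and let $\sigma$ be an optimal mixed state for $\mathcal{N}$. Let $\rho$ be a pure state and $\rho(\varepsilon)=\rho+\sum_{i\ge1}\varepsilon^iA^{(i)}$ a perturbative expansion of $\rho$, and let $f(\varepsilon)=I_c(\rho(\varepsilon),\mathcal{N})-I_c(\rho,\mathcal{N})$. Suppose $\varepsilon$ with $|\varepsilon|<r$ is such that $\sigma-r'\cdot\rho(\varepsilon)$ is positive semidefinite for some $r'>0$ and $f(\varepsilon)<0$. Then $P^{(1)}(\mathcal{N})>Q^{(1)}(\mathcal{N})$.
   Context: All Hilbert spaces are finite-dimensional; a quantum channel is a completely positive trace-preserving map. For a Stinespring isometry $V$ with $\mathcal{N}(\omega)=\mathrm{Tr}_E(V\omega V^\dagger)$, the complementary channel is $\mathcal{N}^c(\omega)=\mathrm{Tr}_B(V\omega V^\dagger)$. Coherent information: $I_c(\omega,\mathcal{N})=S(\mathcal{N}(\omega))-S(\mathcal{N}^c(\omega))$, $S$ the von Neumann entropy. One-shot quantum capacity: $Q^{(1)}(\mathcal{N})=\max_\omega I_c(\omega,\mathcal{N})$; $\sigma$ is optimal if $I_c(\sigma,\mathcal{N})=Q^{(1)}(\mathcal{N})$. For a finite ensemble $\{p_i,\rho_i\}$ (probabilities $p_i$, states $\rho_i$) with average $\bar\rho=\sum_ip_i\rho_i$, the private information is $I_p(\{p_i,\rho_i\},\mathcal{N})=I_c(\bar\rho,\mathcal{N})-\sum_ip_iI_c(\rho_i,\mathcal{N})$, and the one-shot private capacity is $P^{(1)}(\mathcal{N})=\max_{\{p_i,\rho_i\}}I_p(\{p_i,\rho_i\},\mathcal{N})$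 over all ensembles. A perturbative expansion of $\rho$ is a series $\rho(\varepsilon)=\rho+\sum_{i\ge1}\varepsilon^iA^{(i)}$ with each $A^{(i)}$ traceless Hermitian, such that for some $r>0$ the series converges and $\rho(\varepsilon)$ is a density operator for all $\varepsilon\in(-r,r)$. *)

theory Defs
  imports "Jordan_Normal_Form.Char_Poly" "Jordan_Normal_Form.Schur_Decomposition"
    "HOL-Computational_Algebra.Fundamental_Theorem_Algebra"
begin

definition mtrace :: "complex mat \<Rightarrow> complex" where
  "mtrace A = (\<Sum>i<dim_row A. A $$ (i,i))"

definition hermitian :: "complex mat \<Rightarrow> bool" where
  "hermitian A \<longleftrightarrow> A = mat_adjoint A"

definition psd :: "nat \<Rightarrow> complex mat \<Rightarrow> bool" where
  "psd n A \<longleftrightarrow> A \<in> carrier_mat n n \<and> hermitian A \<and>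
     (\<forall>v \<in> carrier_vec n. 0 \<le> Re (conjugate v \<bullet> (A *\<^sub>v v)))"

definition density :: "nat \<Rightarrow> complex mat \<Rightarrow> bool" where
  "density n \<rho> \<longleftrightarrow> psd n \<rho> \<and> mtrace \<rho> = 1"

definition pure_state :: "nat \<Rightarrow> complex mat \<Rightarrow> bool" where
  "pure_state n \<rho> \<longleftrightarrow> density n \<rho> \<and> \<rho> * \<rho> = \<rho>"

text \<open>Von Neumann entropy: minus the sum of lambda ln lambda over the eigenvalues
  (roots of the characteristic polynomial, with multiplicity); note ln 0 = 0 in Isabelle,
  matching the convention 0 log 0 = 0.\<close>
definition vn_entropy :: "complex mat \<Rightarrow> real" where
  "vn_entropy \<rho> = - (\<Sum>x\<in>#proots (char_poly \<rho>). Re x * ln (Re x))"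

text \<open>Index of B \<otimes> E: the basis vector b \<otimes> e has index b * dE + e.\<close>

definition isometry :: "nat \<Rightarrow> nat \<Rightarrow> nat \<Rightarrow> complex mat \<Rightarrow> bool" where
  "isometry dA dB dE V \<longleftrightarrow> V \<in> carrier_mat (dB * dE) dA \<and> mat_adjoint V * V = 1\<^sub>m dA"

definition ptrace_E :: "nat \<Rightarrow> nat \<Rightarrow> complex mat \<Rightarrow> complex mat" where
  "ptrace_E dB dE X = mat dB dB (\<lambda>(b, b'). \<Sum>e<dE. X $$ (b * dE + e, b' * dE + e))"

definition ptrace_B :: "nat \<Rightarrow> nat \<Rightarrow> complex mat \<Rightarrow> complex mat" where
  "ptrace_B dB dE X = mat dE dE (\<lambda>(e, e'). \<Sum>b<dB. X $$ (b * dE + e, b * dE + e'))"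

definition channel :: "nat \<Rightarrow> nat \<Rightarrow> complex mat \<Rightarrow> complex mat \<Rightarrow> complex mat" where
  "channel dB dE V \<omega> = ptrace_E dB dE (V * \<omega> * mat_adjoint V)"

definition compl_channel :: "nat \<Rightarrow> nat \<Rightarrow> complex mat \<Rightarrow> complex mat \<Rightarrow> complex mat" where
  "compl_channel dB dE V \<omega> = ptrace_B dB dE (V * \<omega> * mat_adjoint V)"

definition coh_info :: "nat \<Rightarrow> nat \<Rightarrow> complex mat \<Rightarrow> complex mat \<Rightarrow> real" where
  "coh_info dB dE V \<omega> = vn_entropy (channel dB dE V \<omega>) - vn_entropy (compl_channel dB dE V \<omega>)"

definition Q1 :: "nat \<Rightarrow> nat \<Rightarrow> nat \<Rightarrow> complex mat \<Rightarrow> real" where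
  "Q1 dA dB dE V = Sup {coh_info dB dE V \<omega> | \<omega>. density dA \<omega>}"

definition ensemble :: "nat \<Rightarrow> nat \<Rightarrow> (nat \<Rightarrow> real) \<Rightarrow> (nat \<Rightarrow> complex mat) \<Rightarrow> bool" where
  "ensemble dA n p rs \<longleftrightarrow> (\<forall>i<n. 0 \<le> p i \<and> density dA (rs i)) \<and> (\<Sum>i<n. p i) = 1"

definition ens_avg :: "nat \<Rightarrow> nat \<Rightarrow> (nat \<Rightarrow> real) \<Rightarrow> (nat \<Rightarrow> complex mat) \<Rightarrow> complex mat" where
  "ens_avg dA n p rs = mat dA dA (\<lambda>(j, k). \<Sum>i<n. complex_of_real (p i) * rs i $$ (j, k))"

definition private_info ::
  "nat \<Rightarrow> nat \<Rightarrow> nat \<Rightarrow> complex mat \<Rightarrow> nat \<Rightarrow> (nat \<Rightarrow> real) \<Rightarrow> (nat \<Rightarrow> complex mat) \<Rightarrow> real" where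
  "private_info dA dB dE V n p rs =
     coh_info dB dE V (ens_avg dA n p rs) - (\<Sum>i<n. p i * coh_info dB dE V (rs i))"

definition P1 :: "nat \<Rightarrow> nat \<Rightarrow> nat \<Rightarrow> complex mat \<Rightarrow> real" where
  "P1 dA dB dE V = Sup {private_info dA dB dE V n p rs | n p rs. ensemble dA n p rs}"

definition pert_mat :: "nat \<Rightarrow> complex mat \<Rightarrow> (nat \<Rightarrow> complex mat) \<Rightarrow> real \<Rightarrow> complex mat" where
  "pert_mat n \<rho> A \<epsilon> = mat n n (\<lambda>(j, k).
     \<rho> $$ (j, k) + (\<Sum>i. complex_of_real (\<epsilon> ^ Suc i) * A (Suc i) $$ (j, k)))"

definition pert_expansion :: "nat \<Rightarrow> complex mat \<Rightarrow> (nat \<Rightarrow> complex mat) \<Rightarrow> real \<Rightarrow> bool" where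
  "pert_expansion n \<rho> A r \<longleftrightarrow> r > 0 \<and>
     (\<forall>i\<ge>1. A i \<in> carrier_mat n n \<and> hermitian (A i) \<and> mtrace (A i) = 0) \<and>
     (\<forall>\<epsilon>. \<bar>\<epsilon>\<bar> < r \<longrightarrow>
        (\<forall>j<n. \<forall>k<n. summable (\<lambda>i. complex_of_real (\<epsilon> ^ Suc i) * A (Suc i) $$ (j, k))) \<and>
        density n (pert_mat n \<rho> A \<epsilon>))"

end

theory Submission
  imports Defs
begin


definition qf :: "nat \<Rightarrow> complex mat \<Rightarrow> (nat \<Rightarrow> complex) \<Rightarrow> complex" where
  "qf n A f = (\<Sum>i<n. \<Sum>k<n. cnj (f i) * A $$ (i,k) * f k)"

definition pmat :: "nat \<Rightarrow> (nat \<Rightarrow> complex) \<Rightarrow> complex mat" where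
  "pmat n u = mat n n (\<lambda>(j,k). u j * cnj (u k))"

definition herm :: "nat \<Rightarrow> complex mat \<Rightarrow> bool" where
  "herm n A \<longleftrightarrow> (\<forall>i<n. \<forall>j<n. A $$ (i,j) = cnj (A $$ (j,i)))"

lemma adj_dims[simp]: "dim_row (mat_adjoint A) = dim_col A" "dim_col (mat_adjoint A) = dim_row A"
  unfolding mat_adjoint_def by auto

lemma adj_index[simp]: "i < dim_col A \<Longrightarrow> j < dim_row A \<Longrightarrow> mat_adjoint A $$ (i,j) = cnj (A $$ (j,i))"
  unfolding mat_adjoint_def by (simp add: mat_of_rows_def)

lemma adj_carrier[simp]: "A \<in> carrier_mat m n \<Longrightarrow> mat_adjoint A \<in> carrier_mat n m"
proof -
  assume "A \<in> carrier_mat m n"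
  then have "dim_row A = m" "dim_col A = n" by auto
  then show ?thesis by (intro carrier_matI) simp_all
qed

lemma hermitian_iff: assumes A: "A \<in> carrier_mat n n" shows "hermitian A \<longleftrightarrow> herm n A"
  unfolding hermitian_def herm_def
proof
  assume h: "A = mat_adjoint A"
  show "\<forall>i<n. \<forall>j<n. A $$ (i,j) = cnj (A $$ (j,i))"
  proof (intro allI impI)
    fix i j assume ij: "i < n" "j < n"
    have "A $$ (i,j) = mat_adjoint A $$ (i,j)" using h by simp
    also have "\<dots> = cnj (A $$ (j,i))" using ij A by (intro adj_index) auto
    finally show "A $$ (i,j) = cnj (A $$ (j,i))" .
  qed
next
  assume h: "\<forall>i<n. \<forall>j<n. A $$ (i,j) = cnj (A $$ (j,i))"
  show "A = mat_adjoint A"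
  proof (rule eq_matI)
    fix i j assume "i < dim_row (mat_adjoint A)" "j < dim_col (mat_adjoint A)"
    then have ij: "i < n" "j < n" using A by auto
    have "A $$ (i,j) = cnj (A $$ (j,i))" using h ij by blast
    also have "\<dots> = mat_adjoint A $$ (i,j)" using ij A by (intro adj_index[symmetric]) auto
    finally show "A $$ (i,j) = mat_adjoint A $$ (i,j)" .
  qed (use A in auto)
qed

lemma qf_vec: assumes "A \<in> carrier_mat n n" "v \<in> carrier_vec n"
  shows "conjugate v \<bullet> (A *\<^sub>v v) = qf n A (\<lambda>i. v $ i)"
  using assms unfolding qf_def
  by (auto simp: scalar_prod_def sum_distrib_left mult.assoc lessThan_atLeast0 intro!: sum.cong)

lemma psd_iff: "psd n A \<longleftrightarrow> A \<in> carrier_mat n n \<and> herm n A \<and> (\<forall>f. 0 \<le> Re (qf n A f))"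
proof
  assume "psd n A"
  then have A: "A \<in> carrier_mat n n" "herm n A" and p: "\<forall>v \<in> carrier_vec n. 0 \<le> Re (conjugate v \<bullet> (A *\<^sub>v v))"
    unfolding psd_def using hermitian_iff by auto
  have "0 \<le> Re (qf n A f)" for f
  proof -
    have "qf n A f = qf n A (\<lambda>i. vec n f $ i)" unfolding qf_def by simp
    also have "\<dots> = conjugate (vec n f) \<bullet> (A *\<^sub>v vec n f)" using qf_vec[OF A(1)] by simp
    finally show ?thesis using p by auto
  qed
  then show "A \<in> carrier_mat n n \<and> herm n A \<and> (\<forall>f. 0 \<le> Re (qf n A f))" using A by auto
next
  assume "A \<in> carrier_mat n n \<and> herm n A \<and> (\<forall>f. 0 \<le> Re (qf n A f))"
  then show "psd n A" unfolding psd_def using hermitian_iff qf_vec by auto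
qed

lemma mtrace_sum: "A \<in> carrier_mat n n \<Longrightarrow> mtrace A = (\<Sum>i<n. A $$ (i,i))"
  unfolding mtrace_def by auto

lemma density_iff: "density n A \<longleftrightarrow> psd n A \<and> (\<Sum>i<n. A $$ (i,i)) = 1"
  unfolding density_def psd_def using mtrace_sum by auto



lemma sum_delta_r: "j < (n::nat) \<Longrightarrow> (\<Sum>k<n. x k * (if k = j then c else 0)) = x j * (c::complex)"
proof -
  assume j: "j < n"
  have "(\<Sum>k<n. x k * (if k = j then c else 0)) = (\<Sum>k<n. if k = j then x k * c else 0)"
    by (rule sum.cong) auto
  also have "\<dots> = x j * c" using j by (simp add: sum.delta)
  finally show ?thesis .
qed

lemma sum_delta_l: "j < (n::nat) \<Longrightarrow> (\<Sum>k<n. (if k = j then c else 0) * x k) = (c::complex) * x j"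
proof -
  assume j: "j < n"
  have "(\<Sum>k<n. (if k = j then c else 0) * x k) = (\<Sum>k<n. if k = j then c * x k else 0)"
    by (rule sum.cong) auto
  also have "\<dots> = c * x j" using j by (simp add: sum.delta)
  finally show ?thesis .
qed

lemma qf_add_unit:
  assumes j: "j < (n::nat)"
  shows "qf n A (\<lambda>i. v i + (if i = j then c else 0)) = qf n A v
     + c * (\<Sum>i<n. cnj (v i) * A $$ (i,j)) + cnj c * (\<Sum>k<n. A $$ (j,k) * v k) + cnj c * c * A $$ (j,j)"
proof -
  let ?d = "\<lambda>i. if i = j then c else (0::complex)"
  let ?e = "\<lambda>i. if i = j then cnj c else (0::complex)"
  have "qf n A (\<lambda>i. v i + ?d i) = (\<Sum>i<n. \<Sum>k<n. cnj (v i) * A $$ (i,k) * v k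
      + (cnj (v i) * A $$ (i,k)) * ?d k + ?e i * (A $$ (i,k) * v k) + ?e i * (A $$ (i,k) * ?d k))"
    unfolding qf_def by (intro sum.cong refl) (simp add: algebra_simps)
  also have "\<dots> = qf n A v + (\<Sum>i<n. \<Sum>k<n. (cnj (v i) * A $$ (i,k)) * ?d k)
     + (\<Sum>i<n. ?e i * (\<Sum>k<n. A $$ (i,k) * v k)) + (\<Sum>i<n. ?e i * (\<Sum>k<n. A $$ (i,k) * ?d k))"
    unfolding qf_def by (simp add: sum.distrib sum_distrib_left)
  also have "(\<Sum>i<n. \<Sum>k<n. (cnj (v i) * A $$ (i,k)) * ?d k) = (\<Sum>i<n. cnj (v i) * A $$ (i,j) * c)"
    using j by (intro sum.cong refl) (rule sum_delta_r)
  also have "(\<Sum>i<n. ?e i * (\<Sum>k<n. A $$ (i,k) * v k)) = cnj c * (\<Sum>k<n. A $$ (j,k) * v k)"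
    by (rule sum_delta_l[OF j])
  also have "(\<Sum>i<n. ?e i * (\<Sum>k<n. A $$ (i,k) * ?d k)) = cnj c * (\<Sum>k<n. A $$ (j,k) * ?d k)"
    by (rule sum_delta_l[OF j])
  also have "(\<Sum>k<n. A $$ (j,k) * ?d k) = A $$ (j,j) * c"
    by (rule sum_delta_r[OF j])
  finally show ?thesis by (simp add: sum_distrib_left sum_distrib_right algebra_simps)
qed

lemma hermD: "herm n A \<Longrightarrow> i < n \<Longrightarrow> j < n \<Longrightarrow> A $$ (i,j) = cnj (A $$ (j,i))"
  unfolding herm_def by blast

lemma qf_zero[simp]: "qf n A (\<lambda>i. 0) = 0"
  unfolding qf_def by simp

lemma qf_unit: "j < n \<Longrightarrow> qf n A (\<lambda>i. if i = j then 1 else 0) = A $$ (j,j)"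
  using qf_add_unit[of j n A "\<lambda>i. 0" 1] by simp

lemma psd_diag:
  assumes "psd n A" "j < n"
  shows "A $$ (j,j) = complex_of_real (Re (A $$ (j,j)))" "0 \<le> Re (A $$ (j,j))"
proof -
  from assms have h: "herm n A" and q: "\<And>f. 0 \<le> Re (qf n A f)" unfolding psd_iff by auto
  have "A $$ (j,j) = cnj (A $$ (j,j))" using hermD[OF h assms(2) assms(2)] .
  then have "Im (A $$ (j,j)) = Im (cnj (A $$ (j,j)))" by simp
  then have "Im (A $$ (j,j)) = 0" by simp
  then show "A $$ (j,j) = complex_of_real (Re (A $$ (j,j)))" by (simp add: complex_eq_iff)
  show "0 \<le> Re (A $$ (j,j))" using q[of "\<lambda>i. if i = j then 1 else 0"] qf_unit[OF assms(2)] by simp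
qed

lemma psd_zero_diag:
  assumes A: "psd n A" and k: "k < n" and j: "j < n" and z: "A $$ (k,k) = 0"
  shows "A $$ (j,k) = 0"
proof (rule ccontr)
  assume nz: "A $$ (j,k) \<noteq> 0"
  from A have h: "herm n A" and q: "\<And>f. 0 \<le> Re (qf n A f)" unfolding psd_iff by auto
  have jk: "j \<noteq> k" using nz z by auto
  let ?a = "A $$ (j,k)"
  define t where "t = (Re (A $$ (j,j)) + 1) / (2 * (cmod ?a)^2)"
  have t: "t * (2 * (cmod ?a)^2) = Re (A $$ (j,j)) + 1" using nz unfolding t_def by simp
  define c where "c = - complex_of_real t * cnj ?a"
  let ?v = "\<lambda>i. if i = j then 1 else (0::complex)"
  have s1: "(\<Sum>i<n. cnj (?v i) * A $$ (i,k)) = A $$ (j,k)"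
  proof -
    have "(\<Sum>i<n. cnj (?v i) * A $$ (i,k)) = (\<Sum>i<n. (if i = j then 1 else 0) * A $$ (i,k))"
      by (intro sum.cong) auto
    also have "\<dots> = A $$ (j,k)" using sum_delta_l[OF j, of 1 "\<lambda>i. A $$ (i,k)"] by simp
    finally show ?thesis .
  qed
  have s2: "(\<Sum>l<n. A $$ (k,l) * ?v l) = A $$ (k,j)"
    using sum_delta_r[OF j, of "\<lambda>l. A $$ (k,l)" 1] by simp
  have akj: "A $$ (k,j) = cnj ?a" using hermD[OF h k j] .
  have qe: "qf n A (\<lambda>i. ?v i + (if i = k then c else 0)) = A $$ (j,j) + c * ?a + cnj c * cnj ?a"
    using qf_add_unit[OF k, of A ?v c] qf_unit[OF j, of A] s1 s2 akj z by simp
  have na: "?a * cnj ?a = complex_of_real ((cmod ?a)^2)" by (rule complex_norm_square[symmetric])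
  have "c * ?a = - complex_of_real t * (?a * cnj ?a)" unfolding c_def by (simp add: algebra_simps)
  also have "\<dots> = - complex_of_real (t * (cmod ?a)^2)" unfolding na by simp
  finally have c1: "c * ?a = - complex_of_real (t * (cmod ?a)^2)" .
  have "cnj c * cnj ?a = - complex_of_real t * (?a * cnj ?a)" unfolding c_def by (simp add: algebra_simps)
  also have "\<dots> = - complex_of_real (t * (cmod ?a)^2)" unfolding na by simp
  finally have c2: "cnj c * cnj ?a = - complex_of_real (t * (cmod ?a)^2)" .
  have "Re (qf n A (\<lambda>i. ?v i + (if i = k then c else 0))) = Re (A $$ (j,j)) - 2 * (t * (cmod ?a)^2)"
    unfolding qe c1 c2 by simp
  also have "\<dots> = -1" using t by (simp add: algebra_simps)
  finally show False using q[of "\<lambda>i. ?v i + (if i = k then c else 0)"] by simp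
qed

lemma psd_zero_diag': "psd n A \<Longrightarrow> k < n \<Longrightarrow> j < n \<Longrightarrow> A $$ (k,k) = 0 \<Longrightarrow> A $$ (k,j) = 0"
proof -
  assume a: "psd n A" "k < n" "j < n" "A $$ (k,k) = 0"
  then have "herm n A" unfolding psd_iff by blast
  then have "A $$ (k,j) = cnj (A $$ (j,k))" using hermD a by blast
  then show ?thesis using psd_zero_diag[OF a(1,2,3,4)] by simp
qed

lemma psd_trace0:
  assumes A: "psd n A" and t: "(\<Sum>i<n. A $$ (i,i)) = 0"
  shows "A = 0\<^sub>m n n"
proof -
  have nn: "\<And>i. i < n \<Longrightarrow> 0 \<le> Re (A $$ (i,i))" using psd_diag[OF A] by auto
  have "(\<Sum>i<n. Re (A $$ (i,i))) = 0" using arg_cong[OF t, of Re] by (simp add: Re_sum)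
  then have "\<forall>i\<in>{..<n}. Re (A $$ (i,i)) = 0" using sum_nonneg_eq_0_iff[of "{..<n}" "\<lambda>i. Re (A $$ (i,i))"] nn by auto
  then have d: "\<And>i. i < n \<Longrightarrow> A $$ (i,i) = 0" using psd_diag(1)[OF A] by (metis lessThan_iff of_real_0)
  have Ac: "A \<in> carrier_mat n n" using A unfolding psd_iff by auto
  show ?thesis
    by (rule eq_matI) (use Ac psd_zero_diag'[OF A] d in auto)
qed



lemma cpm_mult:
  fixes A B :: "complex mat"
  assumes A: "A \<in> carrier_mat m n" and B: "B \<in> carrier_mat n m"
  shows "char_poly_matrix (A * B) = [:0,1:] \<cdot>\<^sub>m 1\<^sub>m m - map_mat (\<lambda>a. [:a:]) A * map_mat (\<lambda>a. [:a:]) B"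
proof -
  have e: "map_mat (\<lambda>a. [:a:]) A * map_mat (\<lambda>a. [:a:]) B = map_mat (\<lambda>a. [:a:]) (A * B)"
    using map_poly_mult(1)[OF A B] by simp
  show ?thesis unfolding e char_poly_matrix_def
    by (rule eq_matI) (use A B in auto)
qed

lemma sylvester_cp:
  fixes A B :: "complex mat"
  assumes A: "A \<in> carrier_mat m n" and B: "B \<in> carrier_mat n m"
  shows "[:0,1:] ^ n * char_poly (A * B) = [:0,1:] ^ m * char_poly (B * A)"
proof -
  define X :: "complex poly" where "X = [:0,1:]"
  define Ap where "Ap = map_mat (\<lambda>a. [:a:]) A"
  define Bp where "Bp = map_mat (\<lambda>a. [:a:]) B"
  have Ap: "Ap \<in> carrier_mat m n" and Bp: "Bp \<in> carrier_mat n m" using A B unfolding Ap_def Bp_def by auto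
  have XI: "\<And>k. X \<cdot>\<^sub>m 1\<^sub>m k \<in> carrier_mat k k" by auto
  define M where "M = four_block_mat (X \<cdot>\<^sub>m 1\<^sub>m m) Ap Bp (1\<^sub>m n)"
  define L where "L = four_block_mat (1\<^sub>m m) (- Ap) (0\<^sub>m n m) (1\<^sub>m n)"
  define R where "R = four_block_mat (1\<^sub>m m) (0\<^sub>m m n) (- Bp) (X \<cdot>\<^sub>m 1\<^sub>m n)"
  have Mc: "M \<in> carrier_mat (m+n) (m+n)" unfolding M_def using Ap Bp by auto
  have Lc: "L \<in> carrier_mat (m+n) (m+n)" unfolding L_def using Ap Bp by auto
  have Rc: "R \<in> carrier_mat (m+n) (m+n)" unfolding R_def using Ap Bp by auto
  have LM: "L * M = four_block_mat (X \<cdot>\<^sub>m 1\<^sub>m m - Ap * Bp) (0\<^sub>m m n) Bp (1\<^sub>m n)"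
  proof -
    have "L * M = four_block_mat (1\<^sub>m m * (X \<cdot>\<^sub>m 1\<^sub>m m) + (- Ap) * Bp) (1\<^sub>m m * Ap + (- Ap) * 1\<^sub>m n)
      (0\<^sub>m n m * (X \<cdot>\<^sub>m 1\<^sub>m m) + 1\<^sub>m n * Bp) (0\<^sub>m n m * Ap + 1\<^sub>m n * 1\<^sub>m n)"
      unfolding L_def M_def by (rule mult_four_block_mat) (use Ap Bp in auto)
    also have "1\<^sub>m m * (X \<cdot>\<^sub>m 1\<^sub>m m) + (- Ap) * Bp = X \<cdot>\<^sub>m 1\<^sub>m m - Ap * Bp"
    proof -
      have "(- Ap) * Bp = - (Ap * Bp)" using Ap Bp by simp
      then show ?thesis by (simp, intro eq_matI) (use Ap Bp in auto)
    qed
    also have "1\<^sub>m m * Ap + (- Ap) * 1\<^sub>m n = 0\<^sub>m m n" using Ap by (simp, intro eq_matI) (use Ap in auto)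
    also have "0\<^sub>m n m * (X \<cdot>\<^sub>m 1\<^sub>m m) + 1\<^sub>m n * Bp = Bp" using Bp by simp
    also have "0\<^sub>m n m * Ap + 1\<^sub>m n * 1\<^sub>m n = 1\<^sub>m n" using Ap by simp
    finally show ?thesis .
  qed
  have RM: "R * M = four_block_mat (X \<cdot>\<^sub>m 1\<^sub>m m) Ap (0\<^sub>m n m) (X \<cdot>\<^sub>m 1\<^sub>m n - Bp * Ap)"
  proof -
    have "R * M = four_block_mat (1\<^sub>m m * (X \<cdot>\<^sub>m 1\<^sub>m m) + 0\<^sub>m m n * Bp) (1\<^sub>m m * Ap + 0\<^sub>m m n * 1\<^sub>m n)
      ((- Bp) * (X \<cdot>\<^sub>m 1\<^sub>m m) + (X \<cdot>\<^sub>m 1\<^sub>m n) * Bp) ((- Bp) * Ap + (X \<cdot>\<^sub>m 1\<^sub>m n) * 1\<^sub>m n)"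
      unfolding R_def M_def by (rule mult_four_block_mat) (use Ap Bp in auto)
    also have "1\<^sub>m m * (X \<cdot>\<^sub>m 1\<^sub>m m) + 0\<^sub>m m n * Bp = X \<cdot>\<^sub>m 1\<^sub>m m" using Bp by simp
    also have "1\<^sub>m m * Ap + 0\<^sub>m m n * 1\<^sub>m n = Ap" using Ap by simp
    also have "(- Bp) * (X \<cdot>\<^sub>m 1\<^sub>m m) + (X \<cdot>\<^sub>m 1\<^sub>m n) * Bp = 0\<^sub>m n m"
      by (rule eq_matI) (use Bp in auto)
    also have "(- Bp) * Ap + (X \<cdot>\<^sub>m 1\<^sub>m n) * 1\<^sub>m n = X \<cdot>\<^sub>m 1\<^sub>m n - Bp * Ap"
    proof -
      have "(- Bp) * Ap = - (Bp * Ap)" using Ap Bp by simp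
      then show ?thesis by (simp, intro eq_matI) (use Ap Bp in auto)
    qed
    finally show ?thesis .
  qed
  have dL: "det L = 1" unfolding L_def
    by (subst det_four_block_mat_lower_left_zero[of _ m _ n]) (use Ap in auto)
  have dR: "det R = X ^ n" unfolding R_def
    by (subst det_four_block_mat_upper_right_zero[of _ m _ n]) (use Bp in auto)
  have dLM: "det (L * M) = char_poly (A * B)"
  proof -
    have "det (L * M) = det (X \<cdot>\<^sub>m 1\<^sub>m m - Ap * Bp) * det (1\<^sub>m n)"
      unfolding LM by (rule det_four_block_mat_upper_right_zero[of _ m _ n]) (use Ap Bp in auto)
    also have "X \<cdot>\<^sub>m 1\<^sub>m m - Ap * Bp = char_poly_matrix (A * B)"
      unfolding X_def Ap_def Bp_def using cpm_mult[OF A B] by simp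
    finally show ?thesis unfolding char_poly_def by simp
  qed
  have dRM: "det (R * M) = X ^ m * char_poly (B * A)"
  proof -
    have "det (R * M) = det (X \<cdot>\<^sub>m 1\<^sub>m m) * det (X \<cdot>\<^sub>m 1\<^sub>m n - Bp * Ap)"
      unfolding RM by (rule det_four_block_mat_lower_left_zero[of _ m _ n]) (use Ap Bp in auto)
    also have "X \<cdot>\<^sub>m 1\<^sub>m n - Bp * Ap = char_poly_matrix (B * A)"
      unfolding X_def Ap_def Bp_def using cpm_mult[OF B A] by simp
    finally show ?thesis unfolding char_poly_def by simp
  qed
  have "char_poly (A * B) = det M" using dLM det_mult[OF Lc Mc] dL by simp
  moreover have "X ^ m * char_poly (B * A) = X ^ n * det M" using dRM det_mult[OF Rc Mc] dR by simp
  ultimately show ?thesis unfolding X_def by simp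
qed

lemma cp_nonzero: "A \<in> carrier_mat n n \<Longrightarrow> char_poly (A :: complex mat) \<noteq> 0"
  using degree_monic_char_poly[of A n] by auto

lemma proots_Xpow: "p \<noteq> 0 \<Longrightarrow> proots ([:0,1:] ^ k * (p :: complex poly)) = replicate_mset k 0 + proots p"
proof -
  assume p: "p \<noteq> 0"
  have "proots ([:0,1:] ^ k * p) = proots ([:0,1:] ^ k) + proots p"
    by (rule proots_mult) (use p in auto)
  also have "proots ([:0,1:] ^ k :: complex poly) = repeat_mset k {#0#}"
    using proots_power[of "[:0,1:] :: complex poly" k] proots_linear_factor[of "0::complex"] by simp
  finally show ?thesis by simp
qed

lemma entropy_Xpow:
  fixes P Q :: "complex mat"
  assumes P: "P \<in> carrier_mat p p" and Q: "Q \<in> carrier_mat q q"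
    and e: "[:0,1:] ^ a * char_poly P = [:0,1:] ^ b * char_poly Q"
  shows "vn_entropy P = vn_entropy Q"
proof -
  let ?g = "\<lambda>x::complex. Re x * ln (Re x)"
  have "replicate_mset a 0 + proots (char_poly P) = replicate_mset b 0 + proots (char_poly Q)"
    using arg_cong[OF e, of proots] proots_Xpow[OF cp_nonzero[OF P]] proots_Xpow[OF cp_nonzero[OF Q]] by simp
  then have "(\<Sum>x\<in>#replicate_mset a 0 + proots (char_poly P). ?g x) = (\<Sum>x\<in>#replicate_mset b 0 + proots (char_poly Q). ?g x)"
    by simp
  then show ?thesis unfolding vn_entropy_def by simp
qed



lemma mult_idx: "A \<in> carrier_mat m k \<Longrightarrow> B \<in> carrier_mat k n \<Longrightarrow> i < m \<Longrightarrow> j < n \<Longrightarrow>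
  (A * B) $$ (i,j) = (\<Sum>l<k. A $$ (i,l) * B $$ (l,j))"
  by (simp add: scalar_prod_def lessThan_atLeast0)

lemma triple_idx:
  assumes A: "A \<in> carrier_mat m p" and B: "B \<in> carrier_mat p q" and C: "C \<in> carrier_mat q n"
    and i: "i < m" and j: "j < n"
  shows "(A * B * C) $$ (i,j) = (\<Sum>a<p. \<Sum>b<q. A $$ (i,a) * B $$ (a,b) * C $$ (b,j))"
proof -
  have AB: "A * B \<in> carrier_mat m q" using A B by auto
  have "(A * B * C) $$ (i,j) = (\<Sum>b<q. (A * B) $$ (i,b) * C $$ (b,j))" by (rule mult_idx[OF AB C i j])
  also have "\<dots> = (\<Sum>b<q. (\<Sum>a<p. A $$ (i,a) * B $$ (a,b)) * C $$ (b,j))"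
    by (intro sum.cong refl) (simp add: mult_idx[OF A B i])
  also have "\<dots> = (\<Sum>b<q. \<Sum>a<p. A $$ (i,a) * B $$ (a,b) * C $$ (b,j))"
    by (simp add: sum_distrib_right)
  also have "\<dots> = (\<Sum>a<p. \<Sum>b<q. A $$ (i,a) * B $$ (a,b) * C $$ (b,j))"
    by (rule sum.swap)
  finally show ?thesis .
qed

lemma idx_lt: "b < (dB::nat) \<Longrightarrow> e < dE \<Longrightarrow> b * dE + e < dB * dE"
proof -
  assume b: "b < dB" and e: "e < dE"
  have "Suc b * dE \<le> dB * dE" using b by (intro mult_le_mono1) simp
  moreover have "b * dE + e < Suc b * dE" using e by simp
  ultimately show ?thesis by linarith
qed

lemma VpV:
  assumes V: "V \<in> carrier_mat N dA"
  shows "V * pmat dA u * mat_adjoint V = pmat N (\<lambda>x. \<Sum>a<dA. V $$ (x,a) * u a)"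
proof (rule eq_matI)
  fix x y assume "x < dim_row (pmat N (\<lambda>x. \<Sum>a<dA. V $$ (x,a) * u a))" "y < dim_col (pmat N (\<lambda>x. \<Sum>a<dA. V $$ (x,a) * u a))"
  then have x: "x < N" and y: "y < N" unfolding pmat_def by auto
  have P: "pmat dA u \<in> carrier_mat dA dA" unfolding pmat_def by auto
  have "(V * pmat dA u * mat_adjoint V) $$ (x,y) = (\<Sum>a<dA. \<Sum>b<dA. V $$ (x,a) * pmat dA u $$ (a,b) * mat_adjoint V $$ (b,y))"
    by (rule triple_idx[OF V P adj_carrier[OF V] x y])
  also have "\<dots> = (\<Sum>a<dA. \<Sum>b<dA. (V $$ (x,a) * u a) * cnj (V $$ (y,b) * u b))"
    using V y by (intro sum.cong refl) (simp add: pmat_def)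
  also have "\<dots> = (\<Sum>a<dA. V $$ (x,a) * u a) * cnj (\<Sum>b<dA. V $$ (y,b) * u b)"
    by (simp add: sum_product cnj_sum)
  also have "\<dots> = pmat N (\<lambda>x. \<Sum>a<dA. V $$ (x,a) * u a) $$ (x,y)"
    using x y by (simp add: pmat_def)
  finally show "(V * pmat dA u * mat_adjoint V) $$ (x,y) = pmat N (\<lambda>x. \<Sum>a<dA. V $$ (x,a) * u a) $$ (x,y)" .
qed (use V in \<open>auto simp: pmat_def\<close>)

lemma ptraceE_pmat:
  fixes dB dE :: nat and w :: "nat \<Rightarrow> complex"
  defines "M \<equiv> mat dB dE (\<lambda>(b,e). w (b * dE + e))"
  shows "ptrace_E dB dE (pmat (dB * dE) w) = M * mat_adjoint M"
proof (rule eq_matI)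
  have Mc: "M \<in> carrier_mat dB dE" unfolding M_def by auto
  fix i j assume "i < dim_row (M * mat_adjoint M)" "j < dim_col (M * mat_adjoint M)"
  then have i: "i < dB" and j: "j < dB" using Mc by auto
  have "(M * mat_adjoint M) $$ (i,j) = (\<Sum>e<dE. M $$ (i,e) * mat_adjoint M $$ (e,j))"
    by (rule mult_idx[OF Mc adj_carrier[OF Mc] i j])
  also have "\<dots> = (\<Sum>e<dE. w (i * dE + e) * cnj (w (j * dE + e)))"
    using i j Mc by (intro sum.cong refl) (simp add: M_def)
  also have "\<dots> = ptrace_E dB dE (pmat (dB * dE) w) $$ (i,j)"
    using i j by (simp add: ptrace_E_def pmat_def idx_lt)
  finally show "ptrace_E dB dE (pmat (dB * dE) w) $$ (i,j) = (M * mat_adjoint M) $$ (i,j)" by simp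
qed (auto simp: ptrace_E_def M_def)

lemma ptraceB_pmat:
  fixes dB dE :: nat and w :: "nat \<Rightarrow> complex"
  defines "M \<equiv> mat dB dE (\<lambda>(b,e). w (b * dE + e))"
  shows "ptrace_B dB dE (pmat (dB * dE) w) = transpose_mat (mat_adjoint M * M)"
proof (rule eq_matI)
  have Mc: "M \<in> carrier_mat dB dE" unfolding M_def by auto
  fix i j assume "i < dim_row (transpose_mat (mat_adjoint M * M))" "j < dim_col (transpose_mat (mat_adjoint M * M))"
  then have i: "i < dE" and j: "j < dE" using Mc by auto
  have "transpose_mat (mat_adjoint M * M) $$ (i,j) = (mat_adjoint M * M) $$ (j,i)" using i j Mc by simp
  also have "\<dots> = (\<Sum>b<dB. mat_adjoint M $$ (j,b) * M $$ (b,i))"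
    by (rule mult_idx[OF adj_carrier[OF Mc] Mc j i])
  also have "\<dots> = (\<Sum>b<dB. w (b * dE + i) * cnj (w (b * dE + j)))"
    using i j Mc by (intro sum.cong refl) (simp add: M_def)
  also have "\<dots> = ptrace_B dB dE (pmat (dB * dE) w) $$ (i,j)"
    using i j by (simp add: ptrace_B_def pmat_def idx_lt)
  finally show "ptrace_B dB dE (pmat (dB * dE) w) $$ (i,j) = transpose_mat (mat_adjoint M * M) $$ (i,j)" by simp
qed (auto simp: ptrace_B_def M_def)

lemma Ic_pmat:
  assumes V: "isometry dA dB dE V"
  shows "coh_info dB dE V (pmat dA u) = 0"
proof -
  have Vc: "V \<in> carrier_mat (dB * dE) dA" using V unfolding isometry_def by auto
  define w where "w = (\<lambda>x. \<Sum>a<dA. V $$ (x,a) * u a)"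
  define M where "M = mat dB dE (\<lambda>(b,e). w (b * dE + e))"
  have Mc: "M \<in> carrier_mat dB dE" unfolding M_def by auto
  have ch: "channel dB dE V (pmat dA u) = M * mat_adjoint M"
    unfolding channel_def VpV[OF Vc] w_def[symmetric] M_def by (rule ptraceE_pmat)
  have cc: "compl_channel dB dE V (pmat dA u) = transpose_mat (mat_adjoint M * M)"
    unfolding compl_channel_def VpV[OF Vc] w_def[symmetric] M_def by (rule ptraceB_pmat)
  have c1: "M * mat_adjoint M \<in> carrier_mat dB dB" using Mc by auto
  have c2: "mat_adjoint M * M \<in> carrier_mat dE dE" using Mc by auto
  have "vn_entropy (transpose_mat (mat_adjoint M * M)) = vn_entropy (mat_adjoint M * M)"
    unfolding vn_entropy_def using char_poly_transpose_mat[OF c2] by simp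
  moreover have "vn_entropy (M * mat_adjoint M) = vn_entropy (mat_adjoint M * M)"
    by (rule entropy_Xpow[OF c1 c2 sylvester_cp[OF Mc adj_carrier[OF Mc]]])
  ultimately show ?thesis unfolding coh_info_def ch cc by simp
qed



lemma hermD': "herm n A \<Longrightarrow> i < n \<Longrightarrow> j < n \<Longrightarrow> cnj (A $$ (i,j)) = A $$ (j,i)"
  using hermD[of n A j i] by simp

lemma sum4_swap:
  "(\<Sum>a\<in>A. \<Sum>b\<in>B. \<Sum>x\<in>C. \<Sum>y\<in>D. F a b x y) = (\<Sum>x\<in>C. \<Sum>y\<in>D. \<Sum>a\<in>A. \<Sum>b\<in>B. F a b x y)"
proof -
  have "(\<Sum>a\<in>A. \<Sum>b\<in>B. \<Sum>x\<in>C. \<Sum>y\<in>D. F a b x y) = (\<Sum>a\<in>A. \<Sum>x\<in>C. \<Sum>b\<in>B. \<Sum>y\<in>D. F a b x y)"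
    by (intro sum.cong refl) (rule sum.swap)
  also have "\<dots> = (\<Sum>x\<in>C. \<Sum>a\<in>A. \<Sum>b\<in>B. \<Sum>y\<in>D. F a b x y)" by (rule sum.swap)
  also have "\<dots> = (\<Sum>x\<in>C. \<Sum>a\<in>A. \<Sum>y\<in>D. \<Sum>b\<in>B. F a b x y)"
    by (intro sum.cong refl) (rule sum.swap)
  also have "\<dots> = (\<Sum>x\<in>C. \<Sum>y\<in>D. \<Sum>a\<in>A. \<Sum>b\<in>B. F a b x y)"
    by (intro sum.cong refl) (rule sum.swap)
  finally show ?thesis .
qed

lemma conj_idx:
  assumes K: "K \<in> carrier_mat m n" and Y: "Y \<in> carrier_mat n n" and x: "x < m" and y: "y < m"
  shows "(K * Y * mat_adjoint K) $$ (x,y) = (\<Sum>a<n. \<Sum>b<n. K $$ (x,a) * Y $$ (a,b) * cnj (K $$ (y,b)))"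
  using triple_idx[OF K Y adj_carrier[OF K] x y] K y by simp

lemma psd_conj:
  assumes K: "K \<in> carrier_mat m n" and Y: "psd n Y"
  shows "psd m (K * Y * mat_adjoint K)"
proof -
  have Yc: "Y \<in> carrier_mat n n" and hY: "herm n Y" and qY: "\<And>g. 0 \<le> Re (qf n Y g)"
    using Y unfolding psd_iff by auto
  let ?Z = "K * Y * mat_adjoint K"
  have Zc: "?Z \<in> carrier_mat m m" using K Yc by auto
  have hZ: "herm m ?Z" unfolding herm_def
  proof (intro allI impI)
    fix x y assume x: "x < m" and y: "y < m"
    have "cnj (?Z $$ (y,x)) = (\<Sum>a<n. \<Sum>b<n. cnj (K $$ (y,a)) * cnj (Y $$ (a,b)) * K $$ (x,b))"
      unfolding conj_idx[OF K Yc y x] by (simp add: cnj_sum)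
    also have "\<dots> = (\<Sum>a<n. \<Sum>b<n. cnj (K $$ (y,a)) * Y $$ (b,a) * K $$ (x,b))"
      by (intro sum.cong refl) (simp add: hermD'[OF hY])
    also have "\<dots> = (\<Sum>b<n. \<Sum>a<n. cnj (K $$ (y,a)) * Y $$ (b,a) * K $$ (x,b))"
      by (rule sum.swap)
    also have "\<dots> = ?Z $$ (x,y)"
      unfolding conj_idx[OF K Yc x y] by (intro sum.cong refl) (simp add: algebra_simps)
    finally show "?Z $$ (x,y) = cnj (?Z $$ (y,x))" by simp
  qed
  have qZ: "0 \<le> Re (qf m ?Z f)" for f
  proof -
    define g where "g a = (\<Sum>x<m. cnj (K $$ (x,a)) * f x)" for a
    have "qf m ?Z f = (\<Sum>x<m. \<Sum>y<m. \<Sum>a<n. \<Sum>b<n. cnj (f x) * K $$ (x,a) * Y $$ (a,b) * cnj (K $$ (y,b)) * f y)"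
      unfolding qf_def
      by (intro sum.cong refl) (simp add: conj_idx[OF K Yc] sum_distrib_left sum_distrib_right mult.assoc)
    also have "\<dots> = (\<Sum>a<n. \<Sum>b<n. \<Sum>x<m. \<Sum>y<m. cnj (f x) * K $$ (x,a) * Y $$ (a,b) * cnj (K $$ (y,b)) * f y)"
      by (rule sum4_swap[symmetric])
    also have "\<dots> = qf n Y g"
    proof -
      have "(\<Sum>a<n. \<Sum>b<n. \<Sum>x<m. \<Sum>y<m. cnj (f x) * K $$ (x,a) * Y $$ (a,b) * cnj (K $$ (y,b)) * f y)
         = (\<Sum>a<n. \<Sum>b<n. cnj (g a) * Y $$ (a,b) * g b)"
      proof (rule sum.cong[OF refl], rule sum.cong[OF refl])
        fix a b
        have cg: "cnj (g a) = (\<Sum>x<m. K $$ (x,a) * cnj (f x))" by (simp add: g_def cnj_sum)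
        have gb: "g b = (\<Sum>y<m. cnj (K $$ (y,b)) * f y)" by (simp add: g_def)
        have "cnj (g a) * Y $$ (a,b) * g b = (\<Sum>x<m. K $$ (x,a) * cnj (f x) * Y $$ (a,b)) * (\<Sum>y<m. cnj (K $$ (y,b)) * f y)"
          unfolding cg gb sum_distrib_right ..
        also have "\<dots> = (\<Sum>x<m. \<Sum>y<m. K $$ (x,a) * cnj (f x) * Y $$ (a,b) * (cnj (K $$ (y,b)) * f y))"
          by (rule sum_product)
        also have "\<dots> = (\<Sum>x<m. \<Sum>y<m. cnj (f x) * K $$ (x,a) * Y $$ (a,b) * cnj (K $$ (y,b)) * f y)"
          by (rule sum.cong[OF refl], rule sum.cong[OF refl]) (simp add: algebra_simps)
        finally show "(\<Sum>x<m. \<Sum>y<m. cnj (f x) * K $$ (x,a) * Y $$ (a,b) * cnj (K $$ (y,b)) * f y) = cnj (g a) * Y $$ (a,b) * g b"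
          by simp
      qed
      then show ?thesis unfolding qf_def .
    qed
    finally show ?thesis using qY by simp
  qed
  show ?thesis unfolding psd_iff using Zc hZ qZ by auto
qed

lemma trace_conj_iso:
  fixes K Y :: "complex mat"
  assumes K: "K \<in> carrier_mat m n" and iso: "mat_adjoint K * K = 1\<^sub>m n" and Y: "Y \<in> carrier_mat n n"
  shows "(\<Sum>x<m. (K * Y * mat_adjoint K) $$ (x,x)) = (\<Sum>a<n. Y $$ (a,a))"
proof -
  have d: "(\<Sum>x<m. cnj (K $$ (x,b)) * K $$ (x,a)) = (if b = a then 1 else 0)" if a: "a < n" and b: "b < n" for a b
  proof -
    have "(mat_adjoint K * K) $$ (b,a) = (\<Sum>x<m. mat_adjoint K $$ (b,x) * K $$ (x,a))"
      by (rule mult_idx[OF adj_carrier[OF K] K b a])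
    also have "\<dots> = (\<Sum>x<m. cnj (K $$ (x,b)) * K $$ (x,a))" using K b by (intro sum.cong refl) simp
    finally show ?thesis using iso a b by simp
  qed
  have "(\<Sum>x<m. (K * Y * mat_adjoint K) $$ (x,x)) = (\<Sum>x<m. \<Sum>a<n. \<Sum>b<n. K $$ (x,a) * Y $$ (a,b) * cnj (K $$ (x,b)))"
    by (intro sum.cong refl) (simp add: conj_idx[OF K Y])
  also have "\<dots> = (\<Sum>a<n. \<Sum>x<m. \<Sum>b<n. K $$ (x,a) * Y $$ (a,b) * cnj (K $$ (x,b)))"
    by (rule sum.swap[where A="{..<m}" and B="{..<n}"])
  also have "\<dots> = (\<Sum>a<n. \<Sum>b<n. \<Sum>x<m. K $$ (x,a) * Y $$ (a,b) * cnj (K $$ (x,b)))"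
    by (rule sum.cong[OF refl]) (rule sum.swap[where A="{..<m}" and B="{..<n}"])
  also have "\<dots> = (\<Sum>a<n. \<Sum>b<n. Y $$ (a,b) * (\<Sum>x<m. cnj (K $$ (x,b)) * K $$ (x,a)))"
    by (intro sum.cong refl) (simp add: sum_distrib_left algebra_simps)
  also have "\<dots> = (\<Sum>a<n. \<Sum>b<n. Y $$ (a,b) * (if b = a then 1 else 0))"
    by (intro sum.cong refl) (simp add: d)
  also have "\<dots> = (\<Sum>a<n. Y $$ (a,a))"
    by (intro sum.cong refl) (simp add: sum_delta_r)
  finally show ?thesis .
qed

lemma psd_sum:
  assumes Z: "\<And>e. e < k \<Longrightarrow> psd m (Z e)"
  shows "psd m (mat m m (\<lambda>(i,j). \<Sum>e<k. Z e $$ (i,j)))"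
proof -
  let ?S = "mat m m (\<lambda>(i,j). \<Sum>e<k. Z e $$ (i,j))"
  have h: "herm m ?S" unfolding herm_def
  proof (intro allI impI)
    fix i j assume i: "i < m" and j: "j < m"
    have "(\<Sum>e<k. Z e $$ (i,j)) = (\<Sum>e<k. cnj (Z e $$ (j,i)))"
    proof (intro sum.cong refl)
      fix e assume "e \<in> {..<k}"
      then have "herm m (Z e)" using Z unfolding psd_iff by auto
      then show "Z e $$ (i,j) = cnj (Z e $$ (j,i))" using hermD i j by blast
    qed
    then show "?S $$ (i,j) = cnj (?S $$ (j,i))" using i j by (simp add: cnj_sum)
  qed
  have q: "0 \<le> Re (qf m ?S f)" for f
  proof -
    have "qf m ?S f = (\<Sum>i<m. \<Sum>j<m. \<Sum>e<k. cnj (f i) * Z e $$ (i,j) * f j)"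
      unfolding qf_def by (intro sum.cong refl) (simp add: sum_distrib_left sum_distrib_right)
    also have "\<dots> = (\<Sum>e<k. qf m (Z e) f)"
      unfolding qf_def by (simp add: sum.swap[of _ "{..<k}"])
    finally have "Re (qf m ?S f) = (\<Sum>e<k. Re (qf m (Z e) f))" by simp
    moreover have "(\<Sum>e<k. Re (qf m (Z e) f)) \<ge> 0" using Z unfolding psd_iff by (intro sum_nonneg) auto
    ultimately show ?thesis by simp
  qed
  show ?thesis unfolding psd_iff using h q by auto
qed

lemma sum_split: "(\<Sum>x<m*k. h x) = (\<Sum>b<m. \<Sum>e<(k::nat). h (b*k+e))"
proof -
  have "(\<Sum>x<m*k. h x) = (\<Sum>b<m. sum h {b*k..<b*k+k})" by (rule sum.nat_group[symmetric])
  also have "\<dots> = (\<Sum>b<m. \<Sum>e<k. h (b*k+e))"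
  proof (rule sum.cong[OF refl])
    fix b assume "b \<in> {..<m}"
    have "sum h {0 + b*k..<k + b*k} = sum (\<lambda>i. h (i + b*k)) {0..<k}" by (rule sum.shift_bounds_nat_ivl)
    then show "sum h {b*k..<b*k+k} = (\<Sum>e<k. h (b*k+e))" by (simp add: add.commute lessThan_atLeast0)
  qed
  finally show ?thesis .
qed

definition KE :: "nat \<Rightarrow> nat \<Rightarrow> nat \<Rightarrow> complex mat" where
  "KE dB dE e = mat dB (dB*dE) (\<lambda>(b,x). if x = b*dE+e then 1 else 0)"

definition KB :: "nat \<Rightarrow> nat \<Rightarrow> nat \<Rightarrow> complex mat" where
  "KB dB dE b = mat dE (dB*dE) (\<lambda>(e,x). if x = b*dE+e then 1 else 0)"

lemma delta2:
  assumes p: "p < N" and q: "q < N"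
  shows "(\<Sum>x<N. \<Sum>y<N. (if x = p then 1 else 0) * Y $$ (x,y) * cnj (if y = q then 1 else 0)) = (Y $$ (p,q) :: complex)"
proof -
  have c: "\<And>y. cnj (if y = q then 1 else 0) = (if y = q then (1::complex) else 0)" by simp
  have "(\<Sum>x<N. \<Sum>y<N. (if x = p then 1 else 0) * Y $$ (x,y) * cnj (if y = q then 1 else 0))
     = (\<Sum>x<N. (if x = p then 1 else 0) * (\<Sum>y<N. Y $$ (x,y) * (if y = q then 1 else 0)))"
    unfolding c by (intro sum.cong refl) (simp only: sum_distrib_left mult.assoc)
  also have "\<dots> = (\<Sum>x<N. (if x = p then 1 else 0) * Y $$ (x,q))"
    by (intro sum.cong refl) (simp add: sum_delta_r[OF q])
  also have "\<dots> = Y $$ (p,q)" by (simp add: sum_delta_l[OF p])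
  finally show ?thesis .
qed

lemma ptraceE_as_sum:
  assumes Y: "Y \<in> carrier_mat (dB*dE) (dB*dE)"
  shows "ptrace_E dB dE Y = mat dB dB (\<lambda>(i,j). \<Sum>e<dE. (KE dB dE e * Y * mat_adjoint (KE dB dE e)) $$ (i,j))"
proof (rule eq_matI)
  fix i j assume "i < dim_row (mat dB dB (\<lambda>(i,j). \<Sum>e<dE. (KE dB dE e * Y * mat_adjoint (KE dB dE e)) $$ (i,j)))"
    "j < dim_col (mat dB dB (\<lambda>(i,j). \<Sum>e<dE. (KE dB dE e * Y * mat_adjoint (KE dB dE e)) $$ (i,j)))"
  then have i: "i < dB" and j: "j < dB" by auto
  have "(KE dB dE e * Y * mat_adjoint (KE dB dE e)) $$ (i,j) = Y $$ (i*dE+e, j*dE+e)" if e: "e < dE" for e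
  proof -
    have K: "KE dB dE e \<in> carrier_mat dB (dB*dE)" unfolding KE_def by auto
    have "(KE dB dE e * Y * mat_adjoint (KE dB dE e)) $$ (i,j) =
      (\<Sum>x<dB*dE. \<Sum>y<dB*dE. (if x = i*dE+e then 1 else 0) * Y $$ (x,y) * cnj (if y = j*dE+e then 1 else 0))"
      unfolding conj_idx[OF K Y i j] using i j by (intro sum.cong refl) (simp add: KE_def)
    also have "\<dots> = Y $$ (i*dE+e, j*dE+e)" by (rule delta2) (use idx_lt i j e in auto)
    finally show ?thesis .
  qed
  then show "ptrace_E dB dE Y $$ (i,j) = mat dB dB (\<lambda>(i,j). \<Sum>e<dE. (KE dB dE e * Y * mat_adjoint (KE dB dE e)) $$ (i,j)) $$ (i,j)"
    using i j by (simp add: ptrace_E_def)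
qed (auto simp: ptrace_E_def)

lemma ptraceB_as_sum:
  assumes Y: "Y \<in> carrier_mat (dB*dE) (dB*dE)"
  shows "ptrace_B dB dE Y = mat dE dE (\<lambda>(i,j). \<Sum>b<dB. (KB dB dE b * Y * mat_adjoint (KB dB dE b)) $$ (i,j))"
proof (rule eq_matI)
  fix i j assume "i < dim_row (mat dE dE (\<lambda>(i,j). \<Sum>b<dB. (KB dB dE b * Y * mat_adjoint (KB dB dE b)) $$ (i,j)))"
    "j < dim_col (mat dE dE (\<lambda>(i,j). \<Sum>b<dB. (KB dB dE b * Y * mat_adjoint (KB dB dE b)) $$ (i,j)))"
  then have i: "i < dE" and j: "j < dE" by auto
  have "(KB dB dE b * Y * mat_adjoint (KB dB dE b)) $$ (i,j) = Y $$ (b*dE+i, b*dE+j)" if b: "b < dB" for b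
  proof -
    have K: "KB dB dE b \<in> carrier_mat dE (dB*dE)" unfolding KB_def by auto
    have "(KB dB dE b * Y * mat_adjoint (KB dB dE b)) $$ (i,j) =
      (\<Sum>x<dB*dE. \<Sum>y<dB*dE. (if x = b*dE+i then 1 else 0) * Y $$ (x,y) * cnj (if y = b*dE+j then 1 else 0))"
      unfolding conj_idx[OF K Y i j] using i j by (intro sum.cong refl) (simp add: KB_def)
    also have "\<dots> = Y $$ (b*dE+i, b*dE+j)" by (rule delta2) (use idx_lt i j b in auto)
    finally show ?thesis .
  qed
  then show "ptrace_B dB dE Y $$ (i,j) = mat dE dE (\<lambda>(i,j). \<Sum>b<dB. (KB dB dE b * Y * mat_adjoint (KB dB dE b)) $$ (i,j)) $$ (i,j)"
    using i j by (simp add: ptrace_B_def)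
qed (auto simp: ptrace_B_def)

lemma density_ptraceE:
  assumes Y: "density (dB*dE) Y"
  shows "density dB (ptrace_E dB dE Y)"
proof -
  have Yp: "psd (dB*dE) Y" and Yt: "(\<Sum>x<dB*dE. Y $$ (x,x)) = 1" using Y unfolding density_iff by auto
  have Yc: "Y \<in> carrier_mat (dB*dE) (dB*dE)" using Yp unfolding psd_iff by auto
  have "psd dB (ptrace_E dB dE Y)" unfolding ptraceE_as_sum[OF Yc]
    by (rule psd_sum, rule psd_conj[OF _ Yp]) (auto simp: KE_def)
  moreover have "(\<Sum>i<dB. ptrace_E dB dE Y $$ (i,i)) = 1"
    using Yt unfolding sum_split by (simp add: ptrace_E_def)
  ultimately show ?thesis unfolding density_iff by auto
qed

lemma density_ptraceB:
  assumes Y: "density (dB*dE) Y"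
  shows "density dE (ptrace_B dB dE Y)"
proof -
  have Yp: "psd (dB*dE) Y" and Yt: "(\<Sum>x<dB*dE. Y $$ (x,x)) = 1" using Y unfolding density_iff by auto
  have Yc: "Y \<in> carrier_mat (dB*dE) (dB*dE)" using Yp unfolding psd_iff by auto
  have "psd dE (ptrace_B dB dE Y)" unfolding ptraceB_as_sum[OF Yc]
    by (rule psd_sum, rule psd_conj[OF _ Yp]) (auto simp: KB_def)
  moreover have "(\<Sum>i<dE. ptrace_B dB dE Y $$ (i,i)) = 1"
    using Yt unfolding sum_split by (simp add: ptrace_B_def sum.swap[of _ "{..<dE}"])
  ultimately show ?thesis unfolding density_iff by auto
qed

lemma density_VwV:
  assumes V: "isometry dA dB dE V" and w: "density dA \<omega>"
  shows "density (dB*dE) (V * \<omega> * mat_adjoint V)"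
proof -
  have Vc: "V \<in> carrier_mat (dB*dE) dA" and iso: "mat_adjoint V * V = 1\<^sub>m dA" using V unfolding isometry_def by auto
  have wp: "psd dA \<omega>" and wt: "(\<Sum>a<dA. \<omega> $$ (a,a)) = 1" using w unfolding density_iff by auto
  have wc: "\<omega> \<in> carrier_mat dA dA" using wp unfolding psd_iff by auto
  show ?thesis unfolding density_iff using psd_conj[OF Vc wp] trace_conj_iso[OF Vc iso wc] wt by simp
qed

lemma density_channel:
  assumes V: "isometry dA dB dE V" and w: "density dA \<omega>"
  shows "density dB (channel dB dE V \<omega>)" "density dE (compl_channel dB dE V \<omega>)"
  unfolding channel_def compl_channel_def
  using density_ptraceE density_ptraceB density_VwV[OF V w] by auto



lemma hbound:
  fixes t :: real assumes t0: "0 \<le> t" and t1: "t \<le> 1"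
  shows "0 \<le> - (t * ln t)" "- (t * ln t) \<le> 1"
proof -
  have "0 \<le> - (t * ln t) \<and> - (t * ln t) \<le> 1"
  proof (cases "t = 0")
    case True then show ?thesis by simp
  next
    case False
    then have tp: "t > 0" using t0 by simp
    have l0: "ln t \<le> 0" using tp t1 by simp
    have "ln (1/t) \<le> 1/t - 1" using tp by (intro ln_le_minus_one) simp
    then have "- ln t \<le> 1/t - 1" using tp by (simp add: ln_div)
    then have "t * (- ln t) \<le> t * (1/t - 1)" using tp by (intro mult_left_mono) auto
    also have "\<dots> = 1 - t" using tp by (simp add: field_simps)
    finally have "- (t * ln t) \<le> 1 - t" by simp
    moreover have "0 \<le> - (t * ln t)" using tp l0 by (simp add: mult_nonneg_nonpos)
    ultimately show ?thesis using t0 by linarith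
  qed
  then show "0 \<le> - (t * ln t)" "- (t * ln t) \<le> 1" by auto
qed

lemma proots_linprod: "proots (\<Prod>a\<leftarrow>as. [:- a, 1:]) = mset (as :: complex list)"
proof (induct as)
  case Nil then show ?case by simp
next
  case (Cons a as)
  have nz: "(\<Prod>a\<leftarrow>as. [:- a, 1:]) \<noteq> (0 :: complex poly)" by (auto simp: prod_list_zero_iff)
  have eq: "(\<Prod>x\<leftarrow>a # as. [:- x, 1:]) = [:- a, 1:] * (\<Prod>x\<leftarrow>as. [:- x, 1:])"
    by (simp only: list.map prod_list.Cons)
  have pm: "proots ([:- a, 1:] * (\<Prod>x\<leftarrow>as. [:- x, 1:])) = proots [:- a, 1:] + proots (\<Prod>x\<leftarrow>as. [:- x, 1:])"
    by (rule proots_mult) (use nz in auto)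
  show ?case unfolding eq pm Cons.hyps by simp
qed

lemma trace_comm:
  fixes A C :: "complex mat"
  assumes A: "A \<in> carrier_mat n k" and C: "C \<in> carrier_mat k n"
  shows "(\<Sum>i<n. (A * C) $$ (i,i)) = (\<Sum>j<k. (C * A) $$ (j,j))"
proof -
  have "(\<Sum>i<n. (A * C) $$ (i,i)) = (\<Sum>i<n. \<Sum>j<k. A $$ (i,j) * C $$ (j,i))"
    by (rule sum.cong[OF refl]) (simp add: mult_idx[OF A C])
  also have "\<dots> = (\<Sum>j<k. \<Sum>i<n. A $$ (i,j) * C $$ (j,i))" by (rule sum.swap)
  also have "\<dots> = (\<Sum>j<k. (C * A) $$ (j,j))"
    by (rule sum.cong[OF refl]) (simp add: mult_idx[OF C A], rule sum.cong, auto simp: mult.commute)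
  finally show ?thesis .
qed

lemma eig_re_nonneg:
  assumes X: "psd n X" and a: "poly (char_poly X) a = 0"
  shows "0 \<le> Re a"
proof -
  have Xc: "X \<in> carrier_mat n n" and q: "\<And>f. 0 \<le> Re (qf n X f)" using X unfolding psd_iff by auto
  have "eigenvalue X a" using eigenvalue_root_char_poly[OF Xc] a by simp
  then obtain v where ev: "eigenvector X v a" unfolding eigenvalue_def by auto
  then have v: "v \<in> carrier_vec n" and vnz: "v \<noteq> 0\<^sub>v n" and Xv: "X *\<^sub>v v = a \<cdot>\<^sub>v v"
    unfolding eigenvector_def using Xc by auto
  define s where "s = (\<Sum>i<n. (cmod (v $ i))^2)"
  have "conjugate v \<bullet> v = (\<Sum>i<n. cnj (v$i) * v$i)" unfolding scalar_prod_def using v by (simp add: lessThan_atLeast0)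
  also have "\<dots> = (\<Sum>i<n. complex_of_real ((cmod (v$i))^2))"
    by (rule sum.cong[OF refl]) (metis complex_norm_square mult.commute)
  also have "\<dots> = complex_of_real s" unfolding s_def by simp
  finally have cs: "conjugate v \<bullet> v = complex_of_real s" .
  obtain i where i: "i < n" and vi: "v $ i \<noteq> 0" using vnz v by (metis eq_vecI carrier_vecD index_zero_vec(1) index_zero_vec(2))
  have "s > 0" unfolding s_def using i vi by (intro sum_pos2[of _ i]) auto
  have "qf n X (\<lambda>i. v $ i) = conjugate v \<bullet> (X *\<^sub>v v)" using qf_vec[OF Xc v] by simp
  also have "\<dots> = a * complex_of_real s" unfolding Xv using v cs by simp
  finally have "0 \<le> Re a * s" using q[of "\<lambda>i. v $ i"] by simp
  then show ?thesis using \<open>s > 0\<close> by (simp add: zero_le_mult_iff)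
qed

lemma entropy_bound:
  assumes X: "density n X"
  shows "0 \<le> vn_entropy X" "vn_entropy X \<le> real n"
proof -
  have Xp: "psd n X" and Xt: "(\<Sum>i<n. X $$ (i,i)) = 1" using X unfolding density_iff by auto
  have Xc: "X \<in> carrier_mat n n" using Xp unfolding psd_iff by auto
  obtain as where cp: "char_poly X = (\<Prod>a\<leftarrow>as. [:- a, 1:])" and len: "length as = n"
    using char_poly_factorized[OF Xc] by auto
  have pr: "proots (char_poly X) = mset as" unfolding cp by (rule proots_linprod)
  have nn: "0 \<le> Re a" if "a \<in> set as" for a
  proof -
    have "a \<in># proots (char_poly X)" using pr that by simp
    then have "poly (char_poly X) a = 0" using set_count_proots[OF cp_nonzero[OF Xc]] by auto
    then show ?thesis by (rule eig_re_nonneg[OF Xp])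
  qed
  obtain B P Q where sd: "schur_decomposition X as = (B,P,Q)" by (cases "schur_decomposition X as") auto
  from schur_decomposition[OF Xc cp sd] have sim: "similar_mat_wit X B P Q" and dg: "diag_mat B = as" by auto
  from sim Xc have Bc: "B \<in> carrier_mat n n" and Pc: "P \<in> carrier_mat n n" and Qc: "Q \<in> carrier_mat n n"
    and QP: "Q * P = 1\<^sub>m n" and XPBQ: "X = P * B * Q"
    unfolding similar_mat_wit_def Let_def by auto
  have "(\<Sum>i<n. X $$ (i,i)) = (\<Sum>i<n. ((P * B) * Q) $$ (i,i))" using XPBQ by simp
  also have "\<dots> = (\<Sum>i<n. (Q * (P * B)) $$ (i,i))" by (rule trace_comm) (use Pc Bc Qc in auto)
  also have "Q * (P * B) = B" using QP Pc Bc Qc by (simp add: assoc_mult_mat[symmetric, of Q n n P n B n])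
  also have "(\<Sum>i<n. B $$ (i,i)) = sum_list as"
    unfolding dg[symmetric] diag_mat_def using Bc by (simp add: sum_set_upt_conv_sum_list_nat[symmetric] lessThan_atLeast0)
  finally have sa: "sum_list as = 1" using Xt by simp
  have "sum_list (map Re as) = Re (sum_list as)" by (induct as) auto
  then have sr: "sum_list (map Re as) = 1" using sa by simp
  have le1: "Re a \<le> 1" if "a \<in> set as" for a
  proof -
    have "Re a \<le> sum_list (map Re as)" by (rule member_le_sum_list) (use that nn in auto)
    then show ?thesis using sr by simp
  qed
  let ?h = "\<lambda>x::complex. - (Re x * ln (Re x))"
  have ve: "vn_entropy X = sum_list (map ?h as)"
  proof -
    have "\<And>bs. (\<Sum>x\<in>#mset bs. Re x * ln (Re x)) = sum_list (map (\<lambda>x. Re x * ln (Re x)) bs)"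
      by (induct_tac bs) auto
    moreover have "\<And>bs. sum_list (map ?h bs) = - sum_list (map (\<lambda>x. Re x * ln (Re x)) bs)"
      by (induct_tac bs) auto
    ultimately show ?thesis unfolding vn_entropy_def pr by simp
  qed
  have hb: "0 \<le> ?h a \<and> ?h a \<le> 1" if "a \<in> set as" for a using hbound[OF nn[OF that] le1[OF that]] by simp
  have "0 \<le> sum_list (map ?h as)" using hb by (intro sum_list_nonneg) auto
  then show "0 \<le> vn_entropy X" using ve by simp
  have "\<And>bs. (\<forall>a\<in>set bs. ?h a \<le> 1) \<Longrightarrow> sum_list (map ?h bs) \<le> real (length bs)"
  proof -
    fix bs show "(\<forall>a\<in>set bs. ?h a \<le> 1) \<Longrightarrow> sum_list (map ?h bs) \<le> real (length bs)"
      by (induct bs) auto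
  qed
  then have "sum_list (map ?h as) \<le> real n" using hb len by auto
  then show "vn_entropy X \<le> real n" using ve by simp
qed



definition schur_mat :: "nat \<Rightarrow> complex mat \<Rightarrow> nat \<Rightarrow> complex mat" where
  "schur_mat n A j = mat n n (\<lambda>(k,l). A $$ (k,l) - A $$ (k,j) * A $$ (j,l) / A $$ (j,j))"

lemma schur_step:
  assumes A: "psd n A" and j: "j < n" and nz: "A $$ (j,j) \<noteq> 0"
  shows "psd n (schur_mat n A j)"
proof -
  have Ac: "A \<in> carrier_mat n n" and h: "herm n A" and q: "\<And>f. 0 \<le> Re (qf n A f)" using A unfolding psd_iff by auto
  define D where "D = A $$ (j,j)"
  have Dr: "D = complex_of_real (Re D)" unfolding D_def using psd_diag(1)[OF A j] .
  have cD: "cnj D = D" using Dr by (metis complex_cnj_complex_of_real)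
  have Dnz: "D \<noteq> 0" unfolding D_def using nz .
  have Sc: "schur_mat n A j \<in> carrier_mat n n" unfolding schur_mat_def by auto
  have hS: "herm n (schur_mat n A j)" unfolding herm_def
  proof (intro allI impI)
    fix k l assume k: "k < n" and l: "l < n"
    have "cnj (schur_mat n A j $$ (l,k)) = cnj (A $$ (l,k)) - cnj (A $$ (l,j)) * cnj (A $$ (j,k)) / cnj D"
      using k l unfolding schur_mat_def D_def by simp
    also have "\<dots> = A $$ (k,l) - A $$ (j,l) * A $$ (k,j) / D"
      using k l j unfolding cD by (simp add: hermD'[OF h])
    also have "\<dots> = schur_mat n A j $$ (k,l)" using k l unfolding schur_mat_def D_def by simp
    finally show "schur_mat n A j $$ (k,l) = cnj (schur_mat n A j $$ (l,k))" by simp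
  qed
  have qS: "0 \<le> Re (qf n (schur_mat n A j) f)" for f
  proof -
    define a where "a = (\<Sum>k<n. A $$ (j,k) * f k)"
    have ca: "cnj a = (\<Sum>i<n. cnj (f i) * A $$ (i,j))"
      unfolding a_def cnj_sum by (rule sum.cong[OF refl]) (simp add: hermD'[OF h] j mult.commute)
    have "qf n (schur_mat n A j) f = (\<Sum>i<n. \<Sum>k<n. cnj (f i) * A $$ (i,k) * f k - (cnj (f i) * A $$ (i,j)) * (A $$ (j,k) * f k) / D)"
      unfolding qf_def by (rule sum.cong[OF refl], rule sum.cong[OF refl]) (simp add: schur_mat_def D_def field_simps)
    also have "\<dots> = qf n A f - (\<Sum>i<n. \<Sum>k<n. (cnj (f i) * A $$ (i,j)) * (A $$ (j,k) * f k)) / D"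
      unfolding qf_def by (simp add: sum_subtractf sum_divide_distrib)
    also have "(\<Sum>i<n. \<Sum>k<n. (cnj (f i) * A $$ (i,j)) * (A $$ (j,k) * f k)) = cnj a * a"
      unfolding sum_product[symmetric] by (simp only: ca[symmetric] a_def[symmetric])
    finally have e1: "qf n (schur_mat n A j) f = qf n A f - cnj a * a / D" .
    define c where "c = - a / D"
    have cc: "cnj c = - cnj a / D" unfolding c_def using cD by simp
    have e2: "qf n A (\<lambda>i. f i + (if i = j then c else 0)) = qf n A f + c * cnj a + cnj c * a + cnj c * c * D"
      using qf_add_unit[OF j, of A f c] unfolding ca[symmetric] a_def[symmetric] D_def by simp
    have "c * cnj a + cnj c * a + cnj c * c * D = - cnj a * a / D"
      unfolding cc unfolding c_def using Dnz by (simp add: field_simps power2_eq_square)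
    then have X: "qf n A f + c * cnj a + cnj c * a + cnj c * c * D = qf n A f + (- cnj a * a / D)"
      by (metis add.assoc)
    have "qf n (schur_mat n A j) f = qf n A (\<lambda>i. f i + (if i = j then c else 0))"
      unfolding e1 e2 X by simp
    then show ?thesis using q by simp
  qed
  show ?thesis unfolding psd_iff using Sc hS qS by auto
qed

lemma sqrt_fact:
  assumes d: "d > 0" and h: "herm n A" and k: "k < n" and l: "l < n" and j: "j < n"
  shows "(A $$ (k,j) / complex_of_real (sqrt d)) * cnj (A $$ (l,j) / complex_of_real (sqrt d)) = A $$ (k,j) * A $$ (j,l) / complex_of_real d"
proof -
  have s: "complex_of_real (sqrt d) * complex_of_real (sqrt d) = complex_of_real d"
    using d by (simp flip: of_real_mult)
  have "(A $$ (k,j) / complex_of_real (sqrt d)) * cnj (A $$ (l,j) / complex_of_real (sqrt d))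
     = A $$ (k,j) * A $$ (j,l) / (complex_of_real (sqrt d) * complex_of_real (sqrt d))"
    using l j by (simp add: hermD'[OF h])
  then show ?thesis unfolding s .
qed

lemma psd_decomp_w:
  "\<forall>A. card {j. j < n \<and> A $$ (j,j) \<noteq> 0} = N \<longrightarrow> psd n A \<longrightarrow>
     (\<exists>(m::nat) (w::nat \<Rightarrow> nat \<Rightarrow> complex). (\<forall>i<m. \<exists>j<n. w i j \<noteq> 0) \<and> (\<forall>k<n. \<forall>l<n. A $$ (k,l) = (\<Sum>i<m. w i k * cnj (w i l))))"
proof (induct N rule: less_induct)
  case (less N)
  show ?case
  proof (intro allI impI)
    fix A assume cN: "card {j. j < n \<and> A $$ (j,j) \<noteq> 0} = N" and A: "psd n A"
    have h: "herm n A" using A unfolding psd_iff by auto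
    show "\<exists>(m::nat) (w::nat \<Rightarrow> nat \<Rightarrow> complex). (\<forall>i<m. \<exists>j<n. w i j \<noteq> 0) \<and> (\<forall>k<n. \<forall>l<n. A $$ (k,l) = (\<Sum>i<m. w i k * cnj (w i l)))"
    proof (cases "\<exists>j<n. A $$ (j,j) \<noteq> 0")
      case False
      have z: "\<forall>k<n. \<forall>l<n. A $$ (k,l) = 0"
      proof (intro allI impI)
        fix k l assume k: "k < n" and l: "l < n"
        have "A $$ (k,k) = 0" using False k by blast
        then show "A $$ (k,l) = 0" by (rule psd_zero_diag'[OF A k l])
      qed
      show ?thesis
      proof (intro exI conjI)
        show "\<forall>i<(0::nat). \<exists>j<n. (\<lambda>(_::nat) (_::nat). 0::complex) i j \<noteq> 0" by simp
        show "\<forall>k<n. \<forall>l<n. A $$ (k,l) = (\<Sum>i<0. (\<lambda>(_::nat) (_::nat). 0::complex) i k * cnj ((\<lambda>(_::nat) (_::nat). 0::complex) i l))"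
          using z by simp
      qed
    next
      case True
      then obtain j where j: "j < n" and nz: "A $$ (j,j) \<noteq> 0" by auto
      define d where "d = Re (A $$ (j,j))"
      have Ajj: "A $$ (j,j) = complex_of_real d" unfolding d_def using psd_diag(1)[OF A j] .
      have d0: "0 \<le> d" unfolding d_def using psd_diag(2)[OF A j] .
      have "d \<noteq> 0" using nz Ajj by auto
      then have d: "d > 0" using d0 by linarith
      let ?A' = "schur_mat n A j"
      have A': "psd n ?A'" by (rule schur_step[OF A j nz])
      have sub: "{k. k < n \<and> ?A' $$ (k,k) \<noteq> 0} \<subset> {k. k < n \<and> A $$ (k,k) \<noteq> 0}"
      proof
        show "{k. k < n \<and> ?A' $$ (k,k) \<noteq> 0} \<subseteq> {k. k < n \<and> A $$ (k,k) \<noteq> 0}"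
        proof
          fix k assume "k \<in> {k. k < n \<and> ?A' $$ (k,k) \<noteq> 0}"
          then have k: "k < n" and nk: "?A' $$ (k,k) \<noteq> 0" by auto
          show "k \<in> {k. k < n \<and> A $$ (k,k) \<noteq> 0}"
          proof (rule ccontr)
            assume "k \<notin> {k. k < n \<and> A $$ (k,k) \<noteq> 0}"
            then have z: "A $$ (k,k) = 0" using k by auto
            have "A $$ (k,j) = 0" by (rule psd_zero_diag'[OF A k j z])
            then have "?A' $$ (k,k) = 0" using k z unfolding schur_mat_def by simp
            then show False using nk by simp
          qed
        qed
        have "?A' $$ (j,j) = 0" using j nz unfolding schur_mat_def by simp
        then show "{k. k < n \<and> ?A' $$ (k,k) \<noteq> 0} \<noteq> {k. k < n \<and> A $$ (k,k) \<noteq> 0}" using j nz by blast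
      qed
      have lt: "card {k. k < n \<and> ?A' $$ (k,k) \<noteq> 0} < N"
        unfolding cN[symmetric] by (rule psubset_card_mono[OF _ sub]) simp
      note IH = less[OF lt, rule_format, OF refl A']
      then obtain m :: nat and w :: "nat \<Rightarrow> nat \<Rightarrow> complex" where wnz: "\<forall>i<m. \<exists>j<n. w i j \<noteq> 0"
        and dec: "\<forall>k<n. \<forall>l<n. ?A' $$ (k,l) = (\<Sum>i<m. w i k * cnj (w i l))"
        using IH by blast
      define v where "v k = A $$ (k,j) / complex_of_real (sqrt d)" for k
      define w' where "w' = w(m := v)"
      have "\<forall>i<Suc m. \<exists>j<n. w' i j \<noteq> 0"
      proof (intro allI impI)
        fix i assume "i < Suc m"
        show "\<exists>j<n. w' i j \<noteq> 0"
        proof (cases "i = m")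
          case True
          have "v j \<noteq> 0" unfolding v_def using nz d by simp
          then show ?thesis using True j unfolding w'_def by auto
        next
          case False
          then show ?thesis using wnz \<open>i < Suc m\<close> unfolding w'_def by auto
        qed
      qed
      moreover have "\<forall>k<n. \<forall>l<n. A $$ (k,l) = (\<Sum>i<Suc m. w' i k * cnj (w' i l))"
      proof (intro allI impI)
        fix k l assume k: "k < n" and l: "l < n"
        have "(\<Sum>i<Suc m. w' i k * cnj (w' i l)) = (\<Sum>i<m. w i k * cnj (w i l)) + v k * cnj (v l)"
          unfolding w'_def by (simp add: sum.lessThan_Suc)
        also have "(\<Sum>i<m. w i k * cnj (w i l)) = ?A' $$ (k,l)" using dec k l by simp
        also have "v k * cnj (v l) = A $$ (k,j) * A $$ (j,l) / A $$ (j,j)"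
          unfolding v_def Ajj by (rule sqrt_fact[OF d h k l j])
        finally show "A $$ (k,l) = (\<Sum>i<Suc m. w' i k * cnj (w' i l))"
          using k l unfolding schur_mat_def by simp
      qed
      ultimately show ?thesis by (intro exI[of _ "Suc m"] exI[of _ w'] conjI)
    qed
  qed
qed

lemma normalize_vec:
  fixes w :: "nat \<Rightarrow> complex" and n :: nat
  assumes j: "j < n" and nz: "w j \<noteq> 0"
  shows "\<exists>c u. 0 \<le> c \<and> (\<Sum>k<n. u k * cnj (u k)) = 1 \<and> (\<forall>k l. w k * cnj (w l) = complex_of_real c * (u k * cnj (u l)))"
proof -
  define N2 where "N2 = (\<Sum>k<n. (cmod (w k))^2)"
  have N2p: "N2 > 0" unfolding N2_def using j nz by (intro sum_pos2[of _ j]) auto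
  define r where "r = sqrt N2"
  have rr: "complex_of_real r * complex_of_real r = complex_of_real N2" unfolding r_def using N2p by (simp flip: of_real_mult)
  have rnz: "complex_of_real r \<noteq> 0" unfolding r_def using N2p by simp
  define u where "u k = w k / complex_of_real r" for k
  have wc: "\<And>k. w k * cnj (w k) = complex_of_real ((cmod (w k))^2)" by (rule complex_norm_square[symmetric])
  have "(\<Sum>k<n. u k * cnj (u k)) = (\<Sum>k<n. w k * cnj (w k)) / complex_of_real N2"
    unfolding u_def rr[symmetric] by (simp add: sum_divide_distrib)
  also have "(\<Sum>k<n. w k * cnj (w k)) = complex_of_real N2" unfolding N2_def wc by simp
  finally have un: "(\<Sum>k<n. u k * cnj (u k)) = 1" using N2p by simp
  have "w k * cnj (w l) = complex_of_real N2 * (u k * cnj (u l))" for k l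
    unfolding u_def rr[symmetric] using rnz by (simp add: field_simps)
  then show ?thesis using un N2p by (intro exI[of _ N2] exI[of _ u]) auto
qed

lemma psd_decomp:
  assumes A: "psd n A"
  shows "\<exists>(m::nat) (c::nat \<Rightarrow> real) (u::nat \<Rightarrow> nat \<Rightarrow> complex). (\<forall>i<m. 0 \<le> c i \<and> (\<Sum>k<n. u i k * cnj (u i k)) = 1) \<and>
     (\<forall>k<n. \<forall>l<n. A $$ (k,l) = (\<Sum>i<m. complex_of_real (c i) * (u i k * cnj (u i l))))"
proof -
  obtain m :: nat and w :: "nat \<Rightarrow> nat \<Rightarrow> complex" where wnz: "\<forall>i<m. \<exists>j<n. w i j \<noteq> 0" and dec: "\<forall>k<n. \<forall>l<n. A $$ (k,l) = (\<Sum>i<m. w i k * cnj (w i l))"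
    using psd_decomp_w[of n "card {j. j < n \<and> A $$ (j,j) \<noteq> 0}"] A by blast
  have "\<forall>i\<in>{..<m}. \<exists>cu. 0 \<le> fst cu \<and> (\<Sum>k<n. snd cu k * cnj (snd cu k)) = 1 \<and>
      (\<forall>k l. w i k * cnj (w i l) = complex_of_real (fst cu) * (snd cu k * cnj (snd cu l)))"
  proof
    fix i assume "i \<in> {..<m}"
    then obtain j where "j < n" "w i j \<noteq> 0" using wnz by auto
    from normalize_vec[of j n "w i", OF this] obtain c u where "0 \<le> c" "(\<Sum>k<n. u k * cnj (u k)) = 1"
      "\<forall>k l. w i k * cnj (w i l) = complex_of_real c * (u k * cnj (u l))" by blast
    then show "\<exists>cu. 0 \<le> fst cu \<and> (\<Sum>k<n. snd cu k * cnj (snd cu k)) = 1 \<and>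
      (\<forall>k l. w i k * cnj (w i l) = complex_of_real (fst cu) * (snd cu k * cnj (snd cu l)))"
      by (intro exI[of _ "(c,u)"]) simp
  qed
  then obtain cu where cu: "\<forall>i\<in>{..<m}. 0 \<le> fst (cu i) \<and> (\<Sum>k<n. snd (cu i) k * cnj (snd (cu i) k)) = 1 \<and>
      (\<forall>k l. w i k * cnj (w i l) = complex_of_real (fst (cu i)) * (snd (cu i) k * cnj (snd (cu i) l)))"
    by (rule bchoice[elim_format]) blast
  have "\<forall>k<n. \<forall>l<n. A $$ (k,l) = (\<Sum>i<m. complex_of_real (fst (cu i)) * (snd (cu i) k * cnj (snd (cu i) l)))"
  proof (intro allI impI)
    fix k l assume k: "k < n" and l: "l < n"
    have "A $$ (k,l) = (\<Sum>i<m. w i k * cnj (w i l))" using dec k l by blast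
    also have "\<dots> = (\<Sum>i<m. complex_of_real (fst (cu i)) * (snd (cu i) k * cnj (snd (cu i) l)))"
      by (rule sum.cong[OF refl]) (use cu in blast)
    finally show "A $$ (k,l) = (\<Sum>i<m. complex_of_real (fst (cu i)) * (snd (cu i) k * cnj (snd (cu i) l)))" .
  qed
  then show ?thesis using cu by (intro exI[of _ m] exI[of _ "\<lambda>i. fst (cu i)"] exI[of _ "\<lambda>i. snd (cu i)"]) auto
qed



lemma pmat_density:
  assumes u: "(\<Sum>k<n. u k * cnj (u k)) = 1"
  shows "density n (pmat n u)"
proof -
  have Pc: "pmat n u \<in> carrier_mat n n" unfolding pmat_def by auto
  have h: "herm n (pmat n u)" unfolding herm_def pmat_def by auto
  have q: "0 \<le> Re (qf n (pmat n u) f)" for f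
  proof -
    define z where "z = (\<Sum>i<n. cnj (f i) * u i)"
    have cz: "cnj z = (\<Sum>k<n. cnj (u k) * f k)" unfolding z_def cnj_sum by (simp add: mult.commute)
    have "qf n (pmat n u) f = (\<Sum>i<n. \<Sum>k<n. (cnj (f i) * u i) * (cnj (u k) * f k))"
      unfolding qf_def pmat_def by (rule sum.cong[OF refl], rule sum.cong[OF refl]) (simp add: mult.assoc)
    also have "\<dots> = z * cnj z" unfolding sum_product[symmetric] by (simp only: cz[symmetric] z_def)
    also have "\<dots> = complex_of_real ((cmod z)^2)" by (rule complex_norm_square[symmetric])
    finally show ?thesis by simp
  qed
  have t: "(\<Sum>i<n. pmat n u $$ (i,i)) = 1" using u unfolding pmat_def by simp
  show ?thesis unfolding density_iff psd_iff using Pc h q t by auto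
qed

lemma pure_pmat:
  assumes P: "pure_state n \<rho>"
  shows "\<exists>u. (\<Sum>k<n. u k * cnj (u k)) = 1 \<and> \<rho> = pmat n u"
proof -
  have Rp: "psd n \<rho>" and Rt: "(\<Sum>i<n. \<rho> $$ (i,i)) = 1" and idem: "\<rho> * \<rho> = \<rho>"
    using P unfolding pure_state_def density_iff by auto
  have Rc: "\<rho> \<in> carrier_mat n n" and h: "herm n \<rho>" using Rp unfolding psd_iff by auto
  have "\<exists>j<n. \<rho> $$ (j,j) \<noteq> 0"
  proof (rule ccontr)
    assume "\<not> (\<exists>j<n. \<rho> $$ (j,j) \<noteq> 0)"
    then have "(\<Sum>i<n. \<rho> $$ (i,i)) = 0" by simp
    then show False using Rt by simp
  qed
  then obtain j where j: "j < n" and nz: "\<rho> $$ (j,j) \<noteq> 0" by auto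
  define d where "d = Re (\<rho> $$ (j,j))"
  have Rjj: "\<rho> $$ (j,j) = complex_of_real d" unfolding d_def using psd_diag(1)[OF Rp j] .
  have d0: "0 \<le> d" unfolding d_def using psd_diag(2)[OF Rp j] .
  have "d \<noteq> 0" using nz Rjj by auto
  then have d: "d > 0" using d0 by linarith
  have sq: "(\<Sum>k<n. \<rho> $$ (j,k) * \<rho> $$ (k,j)) = \<rho> $$ (j,j)"
  proof -
    have "(\<rho> * \<rho>) $$ (j,j) = (\<Sum>k<n. \<rho> $$ (j,k) * \<rho> $$ (k,j))" by (rule mult_idx[OF Rc Rc j j])
    then show ?thesis using idem by simp
  qed
  let ?S = "schur_mat n \<rho> j"
  have Sp: "psd n ?S" by (rule schur_step[OF Rp j nz])
  have "(\<Sum>k<n. ?S $$ (k,k)) = (\<Sum>k<n. \<rho> $$ (k,k) - \<rho> $$ (j,k) * \<rho> $$ (k,j) / \<rho> $$ (j,j))"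
    unfolding schur_mat_def by (rule sum.cong[OF refl]) (simp add: mult.commute)
  also have "\<dots> = 1 - (\<Sum>k<n. \<rho> $$ (j,k) * \<rho> $$ (k,j)) / \<rho> $$ (j,j)"
    using Rt by (simp add: sum_subtractf sum_divide_distrib)
  also have "\<dots> = 0" unfolding sq using nz by simp
  finally have "?S = 0\<^sub>m n n" by (rule psd_trace0[OF Sp])
  then have ent: "\<rho> $$ (k,l) = \<rho> $$ (k,j) * \<rho> $$ (j,l) / \<rho> $$ (j,j)" if "k < n" "l < n" for k l
  proof -
    have "?S $$ (k,l) = 0" using \<open>?S = 0\<^sub>m n n\<close> that by simp
    then have "\<rho> $$ (k,l) - \<rho> $$ (k,j) * \<rho> $$ (j,l) / \<rho> $$ (j,j) = 0" using that unfolding schur_mat_def by simp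
    then show ?thesis by simp
  qed
  define u where "u k = \<rho> $$ (k,j) / complex_of_real (sqrt d)" for k
  have uu: "u k * cnj (u l) = \<rho> $$ (k,j) * \<rho> $$ (j,l) / \<rho> $$ (j,j)" if "k < n" "l < n" for k l
    unfolding u_def Rjj by (rule sqrt_fact[OF d h that j])
  have "\<rho> = pmat n u"
    by (rule eq_matI) (use Rc ent uu in \<open>auto simp: pmat_def\<close>)
  moreover have "(\<Sum>k<n. u k * cnj (u k)) = 1"
  proof -
    have "(\<Sum>k<n. u k * cnj (u k)) = (\<Sum>k<n. \<rho> $$ (j,k) * \<rho> $$ (k,j) / \<rho> $$ (j,j))"
      by (rule sum.cong[OF refl]) (simp add: uu mult.commute)
    also have "\<dots> = 1" unfolding sum_divide_distrib[symmetric] sq using nz by simp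
    finally show ?thesis .
  qed
  ultimately show ?thesis by blast
qed

lemma Ic_pure: "isometry dA dB dE V \<Longrightarrow> pure_state dA \<rho> \<Longrightarrow> coh_info dB dE V \<rho> = 0"
  using pure_pmat[of dA \<rho>] Ic_pmat by auto

lemma psd_smult:
  assumes c: "0 \<le> c" and A: "psd n A"
  shows "psd n (complex_of_real c \<cdot>\<^sub>m A)"
proof -
  have Ac: "A \<in> carrier_mat n n" and h: "herm n A" and q: "\<And>f. 0 \<le> Re (qf n A f)" using A unfolding psd_iff by auto
  have h': "herm n (complex_of_real c \<cdot>\<^sub>m A)" unfolding herm_def using Ac by (auto simp: hermD'[OF h])
  have "qf n (complex_of_real c \<cdot>\<^sub>m A) f = complex_of_real c * qf n A f" for f
    unfolding qf_def sum_distrib_left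
    by (rule sum.cong[OF refl], rule sum.cong[OF refl]) (use Ac in \<open>simp add: algebra_simps\<close>)
  then have "0 \<le> Re (qf n (complex_of_real c \<cdot>\<^sub>m A) f)" for f using q[of f] c by simp
  then show ?thesis unfolding psd_iff using Ac h' by auto
qed

lemma ens_density:
  assumes E: "ensemble dA N p rs"
  shows "density dA (ens_avg dA N p rs)"
proof -
  have pi: "\<And>i. i < N \<Longrightarrow> 0 \<le> p i" and ri: "\<And>i. i < N \<Longrightarrow> density dA (rs i)" and ps: "(\<Sum>i<N. p i) = 1"
    using E unfolding ensemble_def by auto
  have rc: "\<And>i. i < N \<Longrightarrow> rs i \<in> carrier_mat dA dA" using ri unfolding density_iff psd_iff by auto
  have rdim: "\<And>i. i < N \<Longrightarrow> dim_row (rs i) = dA \<and> dim_col (rs i) = dA" using rc by auto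
  have eq: "ens_avg dA N p rs = mat dA dA (\<lambda>(j,k). \<Sum>i<N. (complex_of_real (p i) \<cdot>\<^sub>m rs i) $$ (j,k))"
    unfolding ens_avg_def by (rule eq_matI) (auto intro!: sum.cong simp: rdim)
  have "psd dA (ens_avg dA N p rs)" unfolding eq
    by (rule psd_sum, rule psd_smult) (use pi ri in \<open>auto simp: density_iff\<close>)
  moreover have "(\<Sum>j<dA. ens_avg dA N p rs $$ (j,j)) = 1"
  proof -
    have "(\<Sum>j<dA. ens_avg dA N p rs $$ (j,j)) = (\<Sum>j<dA. \<Sum>i<N. complex_of_real (p i) * rs i $$ (j,j))"
      unfolding ens_avg_def by simp
    also have "\<dots> = (\<Sum>i<N. complex_of_real (p i) * (\<Sum>j<dA. rs i $$ (j,j)))"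
      by (simp add: sum.swap[of _ "{..<N}"] sum_distrib_left)
    also have "\<dots> = (\<Sum>i<N. complex_of_real (p i))"
      by (rule sum.cong[OF refl]) (use ri in \<open>simp add: density_iff\<close>)
    also have "\<dots> = 1" using ps by (simp flip: of_real_sum)
    finally show ?thesis .
  qed
  ultimately show ?thesis unfolding density_iff by auto
qed

lemma Ic_bounds:
  assumes V: "isometry dA dB dE V" and w: "density dA \<omega>"
  shows "- real dE \<le> coh_info dB dE V \<omega>" "coh_info dB dE V \<omega> \<le> real dB"
  using entropy_bound[OF density_channel(1)[OF V w]] entropy_bound[OF density_channel(2)[OF V w]]
  unfolding coh_info_def by auto

lemma PI_bound:
  assumes V: "isometry dA dB dE V" and E: "ensemble dA N p rs"
  shows "private_info dA dB dE V N p rs \<le> real dB + real dE"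
proof -
  have pi: "\<And>i. i < N \<Longrightarrow> 0 \<le> p i" and ri: "\<And>i. i < N \<Longrightarrow> density dA (rs i)" and ps: "(\<Sum>i<N. p i) = 1"
    using E unfolding ensemble_def by auto
  have "coh_info dB dE V (ens_avg dA N p rs) \<le> real dB" using Ic_bounds(2)[OF V ens_density[OF E]] .
  moreover have "(\<Sum>i<N. p i * (- real dE)) \<le> (\<Sum>i<N. p i * coh_info dB dE V (rs i))"
    by (rule sum_mono, rule mult_left_mono) (use pi ri Ic_bounds(1)[OF V] in auto)
  moreover have "(\<Sum>i<N. p i * (- real dE)) = (\<Sum>i<N. p i) * (- real dE)" by (rule sum_distrib_right[symmetric])
  then have "(\<Sum>i<N. p i * (- real dE)) = - real dE" using ps by simp
  ultimately show ?thesis unfolding private_info_def by linarith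
qed

theorem proposition2:
  fixes dA dB dE :: nat and V \<sigma> \<rho> :: "complex mat" and A :: "nat \<Rightarrow> complex mat"
    and r r' \<epsilon> :: real
  assumes V: "isometry dA dB dE V"
    and \<sigma>_state: "density dA \<sigma>"
    and \<sigma>_mixed: "\<sigma> * \<sigma> \<noteq> \<sigma>"
    and \<sigma>_opt: "coh_info dB dE V \<sigma> = Q1 dA dB dE V"
    and \<rho>_pure: "pure_state dA \<rho>"
    and pert: "pert_expansion dA \<rho> A r"
    and \<epsilon>: "\<bar>\<epsilon>\<bar> < r"
    and r': "r' > 0"
    and dom: "psd dA (\<sigma> - complex_of_real r' \<cdot>\<^sub>m pert_mat dA \<rho> A \<epsilon>)"
    and f_neg: "coh_info dB dE V (pert_mat dA \<rho> A \<epsilon>) - coh_info dB dE V \<rho> < 0"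
  shows "P1 dA dB dE V > Q1 dA dB dE V"
proof -
  define R where "R = pert_mat dA \<rho> A \<epsilon>"
  define D where "D = \<sigma> - complex_of_real r' \<cdot>\<^sub>m R"
  have Rd: "density dA R" using pert \<epsilon> unfolding pert_expansion_def R_def by auto
  have Rc: "R \<in> carrier_mat dA dA" using Rd unfolding density_iff psd_iff by auto
  have Sc: "\<sigma> \<in> carrier_mat dA dA" using \<sigma>_state unfolding density_iff psd_iff by auto
  have Dp: "psd dA D" using dom unfolding D_def R_def .
  have IcR: "coh_info dB dE V R < 0" using f_neg Ic_pure[OF V \<rho>_pure] unfolding R_def by simp
  obtain m :: nat and c :: "nat \<Rightarrow> real" and u :: "nat \<Rightarrow> nat \<Rightarrow> complex"
    where cu: "\<forall>i<m. 0 \<le> c i \<and> (\<Sum>k<dA. u i k * cnj (u i k)) = 1"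
      and dec: "\<forall>k<dA. \<forall>l<dA. D $$ (k,l) = (\<Sum>i<m. complex_of_real (c i) * (u i k * cnj (u i l)))"
    using psd_decomp[OF Dp] by blast
  define p where "p = case_nat r' c"
  define rs where "rs = case_nat R (\<lambda>i. pmat dA (u i))"
  have Dentry: "D $$ (k,l) = \<sigma> $$ (k,l) - complex_of_real r' * R $$ (k,l)" if "k < dA" "l < dA" for k l
    unfolding D_def using that Sc Rc by simp
  have trD: "(\<Sum>k<dA. D $$ (k,k)) = complex_of_real (\<Sum>i<m. c i)"
  proof -
    have "(\<Sum>k<dA. D $$ (k,k)) = (\<Sum>k<dA. \<Sum>i<m. complex_of_real (c i) * (u i k * cnj (u i k)))"
      by (rule sum.cong[OF refl]) (use dec in simp)
    also have "\<dots> = (\<Sum>i<m. complex_of_real (c i) * (\<Sum>k<dA. u i k * cnj (u i k)))"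
      by (simp add: sum.swap[of _ "{..<m}"] sum_distrib_left)
    also have "\<dots> = (\<Sum>i<m. complex_of_real (c i))" by (rule sum.cong[OF refl]) (use cu in simp)
    finally show ?thesis by simp
  qed
  have trD2: "(\<Sum>k<dA. D $$ (k,k)) = 1 - complex_of_real r'"
  proof -
    have "(\<Sum>k<dA. D $$ (k,k)) = (\<Sum>k<dA. \<sigma> $$ (k,k)) - complex_of_real r' * (\<Sum>k<dA. R $$ (k,k))"
      by (simp add: Dentry sum_subtractf sum_distrib_left)
    then show ?thesis using \<sigma>_state Rd unfolding density_iff by simp
  qed
  have csum: "(\<Sum>i<m. c i) = 1 - r'"
  proof -
    have "complex_of_real (\<Sum>i<m. c i) = complex_of_real (1 - r')" using trD trD2 by simp
    then show ?thesis by (simp only: of_real_eq_iff)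
  qed
  have ens: "ensemble dA (Suc m) p rs"
    unfolding ensemble_def
  proof (intro conjI allI impI)
    fix i assume i: "i < Suc m"
    show "0 \<le> p i" using r' cu i unfolding p_def by (cases i) auto
    show "density dA (rs i)" using Rd cu i pmat_density unfolding rs_def by (cases i) auto
  next
    show "(\<Sum>i<Suc m. p i) = 1" unfolding p_def sum.lessThan_Suc_shift using csum by simp
  qed
  have avg: "ens_avg dA (Suc m) p rs = \<sigma>"
  proof (rule eq_matI)
    fix k l assume "k < dim_row \<sigma>" "l < dim_col \<sigma>"
    then have k: "k < dA" and l: "l < dA" using Sc by auto
    have "ens_avg dA (Suc m) p rs $$ (k,l) = complex_of_real r' * R $$ (k,l) + (\<Sum>i<m. complex_of_real (c i) * pmat dA (u i) $$ (k,l))"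
      using k l unfolding ens_avg_def p_def rs_def sum.lessThan_Suc_shift by simp
    also have "(\<Sum>i<m. complex_of_real (c i) * pmat dA (u i) $$ (k,l)) = D $$ (k,l)"
      using dec k l unfolding pmat_def by simp
    also have "complex_of_real r' * R $$ (k,l) + D $$ (k,l) = \<sigma> $$ (k,l)" using Dentry[OF k l] by simp
    finally show "ens_avg dA (Suc m) p rs $$ (k,l) = \<sigma> $$ (k,l)" .
  qed (use Sc in \<open>auto simp: ens_avg_def\<close>)
  have PI: "private_info dA dB dE V (Suc m) p rs = coh_info dB dE V \<sigma> - r' * coh_info dB dE V R"
  proof -
    have "(\<Sum>i<Suc m. p i * coh_info dB dE V (rs i)) = r' * coh_info dB dE V R + (\<Sum>i<m. c i * coh_info dB dE V (pmat dA (u i)))"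
      unfolding p_def rs_def sum.lessThan_Suc_shift by simp
    also have "(\<Sum>i<m. c i * coh_info dB dE V (pmat dA (u i))) = 0" using Ic_pmat[OF V] by simp
    finally show ?thesis unfolding private_info_def avg by simp
  qed
  have gt: "private_info dA dB dE V (Suc m) p rs > Q1 dA dB dE V"
    unfolding PI \<sigma>_opt[symmetric] using r' IcR by (simp add: mult_pos_neg)
  have bdd: "bdd_above {private_info dA dB dE V n p rs | n p rs. ensemble dA n p rs}"
    by (rule bdd_aboveI[of _ "real dB + real dE"]) (use PI_bound[OF V] in auto)
  have "private_info dA dB dE V (Suc m) p rs \<le> P1 dA dB dE V"
    unfolding P1_def by (rule cSup_upper[OF _ bdd]) (use ens in blast)
  then show ?thesis using gt by linarith
qed


end
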